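(* Let $n\ge 1$, $\beta\ge 1$, $\epsilon>0$, and let $H=\sum_{1\le i<j\le n}(-a_{ij}X_iX_j+b_{ij}Y_iY_j)+\sum_{i=1}^n d_iZ_i$ be an $n$-qubit Hamiltonian with $|b_{ij}|\le a_{ij}\le 1/2$ and $|d_i|\le 1$. Let $L=\mathcal{O}(n^2\beta^2\epsilon^{-1})$ be the number of Trotter steps, $\delta=\beta/(2L)$, and let $M_1,M_2$, $M=M_1+M_2=\mathcal{O}(n^4\beta^2\epsilon^{-1})$, $\mathcal{C}_0$, $\mathcal{C}_2$ and the distribution $\pi$ on $\mathcal{C}_0\cup\mathcal{C}_2$ be as defined in the context. Then $$\frac{\sum_{\xi\in\mathcal{C}_2}\pi(\xi)}{\sum_{\xi\in\mathcal{C}_0}\pi(\xi)}=\mathcal{O}(n^4\beta^2\epsilon^{-1}).$$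
   Context: Trotterization: $C=\prod_{1\le i<j\le n}\big(I+\delta(a_{ij}X_iX_j-b_{ij}Y_iY_j)\big)\prod_{i=1}^n(I-\delta d_iZ_i)$, and $(CC^\dagger)^L$ is written as an ordered product $\prod_{m=1}^M O_m$ of one-qubit operators (of the form $I-\delta d_iZ_i$; $M_1$ of them) and two-qubit operators (of the form $I+\delta(a_{ij}X_iX_j-b_{ij}Y_iY_j)$; $M_2$ of them). A path-integral configuration is a string $(\sigma_1,\dots,\sigma_M)$ of computational basis states $\sigma_m\in\{0,1\}^n$, with weight $W(\sigma_1,\dots,\sigma_M)=\prod_{m=1}^M\langle\sigma_m|O_m|\sigma_{m+1}\rangle$, $\sigma_{M+1}:=\sigma_1$ (nonnegative since $|b_{ij}|\le a_{ij}$). $\mathcal{C}_0$ is the set of configurations with nonzero weight; $\sum_{\gamma\in\mathcal{C}_0}W(\gamma)=\mathrm{Tr}[(CC^\dagger)^L]$. Each qubit's imaginary-time line (periodic in $m$) is cut by the operators acting on that qubit into segments; each operator has one "leg" per qubit it acts on on each side (2 legs for a one-qubit operator, 4 for a two-qubit operator), and two operators are "neighbors" if a segment connects a leg of one to a leg of the other. An extended configuration in $\mathcal{C}_2$ consists of two additional Pauli-$X$ operators ("worm heads") inserted into the operator sequence, each located on some segment of some qubit, the two not lying on the same segment (so they are not neighbors), together with a string of basis states; configurations are identified if the worm heads can be slid to the same positions along the imaginary-time direction without passing through an operator acting on that qubit. Its weight is the product of the matrix elements of all operators $O_m$ and of the inserted $X$'s (each $X$ contributes a factor $1$ and flips the state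 of its qubit), i.e. the product of the $O_m$ matrix elements with the qubit states consistent along segments except flipped across each worm head; $\mathcal{C}_2$ is the set of such extended configurations with nonzero weight. $\pi(\gamma)=W(\gamma)/W_{\mathrm{total}}$ for $\gamma\in\mathcal{C}_0$ and $\pi(\gamma)=\frac{2}{M_1+2M_2}\,W(\gamma)/W_{\mathrm{total}}$ for $\gamma\in\mathcal{C}_2$, where $W_{\mathrm{total}}=\sum_{\gamma\in\mathcal{C}_0}W(\gamma)+\frac{2}{M_1+2M_2}\sum_{\gamma\in\mathcal{C}_2}W(\gamma)$. *)

theory Defs
  imports Complex_Main
begin

(* Qubits are indexed 0..n-1. A computational basis state is a function
   nat => bool (True = |1>), with value False outside {..<n}. *)

datatype trot_op = OneQ nat | TwoQ nat nat
  (* OneQ i   : I - delta d_i Z_i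
     TwoQ i j : I + delta (a_ij X_i X_j - b_ij Y_i Y_j), with i < j *)

fun acts :: "trot_op \<Rightarrow> nat set" where
  "acts (OneQ i) = {i}"
| "acts (TwoQ i j) = {i, j}"

fun is_one :: "trot_op \<Rightarrow> bool" where
  "is_one (OneQ i) = True"
| "is_one (TwoQ i j) = False"

definition flip :: "nat set \<Rightarrow> (nat \<Rightarrow> bool) \<Rightarrow> (nat \<Rightarrow> bool)" where
  "flip A \<sigma> = (\<lambda>i. if i \<in> A then \<not> \<sigma> i else \<sigma> i)"

(* matrix element <sigma| O |tau> *)
fun elem :: "real \<Rightarrow> (nat \<Rightarrow> nat \<Rightarrow> real) \<Rightarrow> (nat \<Rightarrow> nat \<Rightarrow> real) \<Rightarrow> (nat \<Rightarrow> real)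
             \<Rightarrow> trot_op \<Rightarrow> (nat \<Rightarrow> bool) \<Rightarrow> (nat \<Rightarrow> bool) \<Rightarrow> real" where
  "elem \<delta> a b d (OneQ i) \<sigma> \<tau> =
     (if \<sigma> = \<tau> then 1 - \<delta> * d i * (if \<sigma> i then -1 else 1) else 0)"
| "elem \<delta> a b d (TwoQ i j) \<sigma> \<tau> =
     (if \<sigma> = \<tau> then 1
      else if \<tau> = flip {i, j} \<sigma>
        then \<delta> * (a i j + (if \<sigma> i = \<sigma> j then b i j else - b i j))
      else 0)"

(* ordered factors of C: prod_{i<j} (lexicographic) then prod_i *)
definition qpairs :: "nat \<Rightarrow> (nat \<times> nat) list" where
  "qpairs n = concat (map (\<lambda>i. map (\<lambda>j. (i, j)) [Suc i..<n]) [0..<n])"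

definition Cseq :: "nat \<Rightarrow> trot_op list" where
  "Cseq n = map (\<lambda>(i, j). TwoQ i j) (qpairs n) @ map OneQ [0..<n]"

(* (C C^dagger)^L: every factor is Hermitian, so C^dagger is the reversed product *)
definition ops :: "nat \<Rightarrow> nat \<Rightarrow> trot_op list" where
  "ops n L = concat (replicate L (Cseq n @ rev (Cseq n)))"

definition M1 :: "nat \<Rightarrow> nat \<Rightarrow> nat" where
  "M1 n L = length (filter is_one (ops n L))"

definition M2 :: "nat \<Rightarrow> nat \<Rightarrow> nat" where
  "M2 n L = length (filter (\<lambda>x. \<not> is_one x) (ops n L))"

definition basis_states :: "nat \<Rightarrow> (nat \<Rightarrow> bool) set" where
  "basis_states n = {\<sigma>. \<forall>i\<ge>n. \<not> \<sigma> i}"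

(* strings (sigma_1,...,sigma_M), 0-indexed, sigma_{M+1} := sigma_1 *)
definition configs :: "nat \<Rightarrow> nat \<Rightarrow> (nat \<Rightarrow> bool) list set" where
  "configs n L = {\<sigma>s. length \<sigma>s = length (ops n L) \<and> set \<sigma>s \<subseteq> basis_states n}"

definition W0 :: "nat \<Rightarrow> nat \<Rightarrow> real \<Rightarrow> (nat \<Rightarrow> nat \<Rightarrow> real) \<Rightarrow> (nat \<Rightarrow> nat \<Rightarrow> real)
                  \<Rightarrow> (nat \<Rightarrow> real) \<Rightarrow> (nat \<Rightarrow> bool) list \<Rightarrow> real" where
  "W0 n L \<delta> a b d \<sigma>s =
     (let M = length (ops n L) in
      \<Prod>m<M. elem \<delta> a b d (ops n L ! m) (\<sigma>s ! m) (\<sigma>s ! ((m + 1) mod M)))"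

definition C0 :: "nat \<Rightarrow> nat \<Rightarrow> real \<Rightarrow> (nat \<Rightarrow> nat \<Rightarrow> real) \<Rightarrow> (nat \<Rightarrow> nat \<Rightarrow> real)
                  \<Rightarrow> (nat \<Rightarrow> real) \<Rightarrow> (nat \<Rightarrow> bool) list set" where
  "C0 n L \<delta> a b d = {\<sigma>s \<in> configs n L. W0 n L \<delta> a b d \<sigma>s \<noteq> 0}"

(* Segments: the segment of qubit q starting right after operator m (which acts on q)
   and running (cyclically) to the next operator acting on q. *)
definition segs :: "nat \<Rightarrow> nat \<Rightarrow> (nat \<times> nat) set" where
  "segs n L = {(m, q). m < length (ops n L) \<and> q \<in> acts (ops n L ! m)}"

(* Extended configuration: a set S of two distinct segments carrying the worm heads
   (each placed, canonically, right after the operator starting its segment),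
   together with the string sigma_m = state on the bra side of O_m. *)
definition W2 :: "nat \<Rightarrow> nat \<Rightarrow> real \<Rightarrow> (nat \<Rightarrow> nat \<Rightarrow> real) \<Rightarrow> (nat \<Rightarrow> nat \<Rightarrow> real)
                  \<Rightarrow> (nat \<Rightarrow> real) \<Rightarrow> (nat \<times> nat) set \<Rightarrow> (nat \<Rightarrow> bool) list \<Rightarrow> real" where
  "W2 n L \<delta> a b d S \<sigma>s =
     (let M = length (ops n L) in
      \<Prod>m<M. elem \<delta> a b d (ops n L ! m) (\<sigma>s ! m)
                 (flip {q. (m, q) \<in> S} (\<sigma>s ! ((m + 1) mod M))))"

definition C2 :: "nat \<Rightarrow> nat \<Rightarrow> real \<Rightarrow> (nat \<Rightarrow> nat \<Rightarrow> real) \<Rightarrow> (nat \<Rightarrow> nat \<Rightarrow> real)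
                  \<Rightarrow> (nat \<Rightarrow> real) \<Rightarrow> ((nat \<times> nat) set \<times> (nat \<Rightarrow> bool) list) set" where
  "C2 n L \<delta> a b d = {(S, \<sigma>s). S \<subseteq> segs n L \<and> card S = 2 \<and> \<sigma>s \<in> configs n L
                        \<and> W2 n L \<delta> a b d S \<sigma>s \<noteq> 0}"

definition Wtotal :: "nat \<Rightarrow> nat \<Rightarrow> real \<Rightarrow> (nat \<Rightarrow> nat \<Rightarrow> real) \<Rightarrow> (nat \<Rightarrow> nat \<Rightarrow> real)
                  \<Rightarrow> (nat \<Rightarrow> real) \<Rightarrow> real" where
  "Wtotal n L \<delta> a b d =
     (\<Sum>\<gamma>\<in>C0 n L \<delta> a b d. W0 n L \<delta> a b d \<gamma>)
     + 2 / real (M1 n L + 2 * M2 n L) * (\<Sum>(S, \<sigma>s)\<in>C2 n L \<delta> a b d. W2 n L \<delta> a b d S \<sigma>s)"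

definition pi0 :: "nat \<Rightarrow> nat \<Rightarrow> real \<Rightarrow> (nat \<Rightarrow> nat \<Rightarrow> real) \<Rightarrow> (nat \<Rightarrow> nat \<Rightarrow> real)
                  \<Rightarrow> (nat \<Rightarrow> real) \<Rightarrow> (nat \<Rightarrow> bool) list \<Rightarrow> real" where
  "pi0 n L \<delta> a b d \<gamma> = W0 n L \<delta> a b d \<gamma> / Wtotal n L \<delta> a b d"

definition pi2 :: "nat \<Rightarrow> nat \<Rightarrow> real \<Rightarrow> (nat \<Rightarrow> nat \<Rightarrow> real) \<Rightarrow> (nat \<Rightarrow> nat \<Rightarrow> real)
                  \<Rightarrow> (nat \<Rightarrow> real) \<Rightarrow> (nat \<times> nat) set \<times> (nat \<Rightarrow> bool) list \<Rightarrow> real" where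
  "pi2 n L \<delta> a b d \<xi> = 2 / real (M1 n L + 2 * M2 n L) * W2 n L \<delta> a b d (fst \<xi>) (snd \<xi>)
                         / Wtotal n L \<delta> a b d"

end

theory Submission
  imports Defs "HOL-Analysis.Convex"
begin

definition mm :: "'a set \<Rightarrow> ('a\<Rightarrow>'a\<Rightarrow>real) \<Rightarrow> ('a\<Rightarrow>'a\<Rightarrow>real) \<Rightarrow> ('a\<Rightarrow>'a\<Rightarrow>real)" where
  "mm B A C = (\<lambda>x y. if x\<in>B \<and> y\<in>B then (\<Sum>z\<in>B. A x z * C z y) else 0)"
definition idm :: "'a set \<Rightarrow> ('a\<Rightarrow>'a\<Rightarrow>real)" where
  "idm B = (\<lambda>x y. if x\<in>B \<and> x = y then 1 else 0)"
definition sp :: "'a set \<Rightarrow> ('a\<Rightarrow>'a\<Rightarrow>real) \<Rightarrow> bool" where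
  "sp B A = (\<forall>x y. A x y \<noteq> 0 \<longrightarrow> x\<in>B \<and> y\<in>B)"
definition tp :: "('a\<Rightarrow>'a\<Rightarrow>real) \<Rightarrow> ('a\<Rightarrow>'a\<Rightarrow>real)" where
  "tp A = (\<lambda>x y. A y x)"
definition tr :: "'a set \<Rightarrow> ('a\<Rightarrow>'a\<Rightarrow>real) \<Rightarrow> real" where
  "tr B A = (\<Sum>x\<in>B. A x x)"
definition frob :: "'a set \<Rightarrow> ('a\<Rightarrow>'a\<Rightarrow>real) \<Rightarrow> real" where
  "frob B A = (\<Sum>x\<in>B. \<Sum>y\<in>B. (A x y)^2)"
definition ip :: "'a set \<Rightarrow> ('a\<Rightarrow>'a\<Rightarrow>real) \<Rightarrow> ('a\<Rightarrow>'a\<Rightarrow>real) \<Rightarrow> real" where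
  "ip B A C = (\<Sum>x\<in>B. \<Sum>y\<in>B. A x y * C x y)"
definition mv :: "'a set \<Rightarrow> ('a\<Rightarrow>'a\<Rightarrow>real) \<Rightarrow> ('a \<Rightarrow> real) \<Rightarrow> ('a \<Rightarrow> real)" where
  "mv B A v = (\<lambda>x. \<Sum>y\<in>B. A x y * v y)"
definition nsq :: "'a set \<Rightarrow> ('a \<Rightarrow> real) \<Rightarrow> real" where
  "nsq B v = (\<Sum>x\<in>B. (v x)^2)"
definition bnd :: "'a set \<Rightarrow> ('a\<Rightarrow>'a\<Rightarrow>real) \<Rightarrow> real \<Rightarrow> bool" where
  "bnd B A K = (\<forall>v. nsq B (mv B A v) \<le> K * nsq B v)"
definition lbnd :: "'a set \<Rightarrow> ('a\<Rightarrow>'a\<Rightarrow>real) \<Rightarrow> real \<Rightarrow> bool" where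
  "lbnd B A K = (\<forall>v. K * nsq B v \<le> nsq B (mv B A v))"
definition lprod :: "'a set \<Rightarrow> ('a\<Rightarrow>'a\<Rightarrow>real) list \<Rightarrow> ('a\<Rightarrow>'a\<Rightarrow>real)" where
  "lprod B Es = foldr (mm B) Es (idm B)"
definition mpow :: "'a set \<Rightarrow> ('a\<Rightarrow>'a\<Rightarrow>real) \<Rightarrow> nat \<Rightarrow> ('a\<Rightarrow>'a\<Rightarrow>real)" where
  "mpow B G k = lprod B (replicate k G)"

lemma mm_assoc: "mm B (mm B A C) D = mm B A (mm B C D)"
proof (rule ext, rule ext)
  fix x y
  show "mm B (mm B A C) D x y = mm B A (mm B C D) x y"
  proof (cases "x\<in>B \<and> y\<in>B")
    case True
    have "mm B (mm B A C) D x y = (\<Sum>z\<in>B. (\<Sum>w\<in>B. A x w * C w z) * D z y)"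
      using True by (auto simp: mm_def intro!: sum.cong)
    also have "\<dots> = (\<Sum>z\<in>B. \<Sum>w\<in>B. A x w * C w z * D z y)"
      by (simp add: sum_distrib_right)
    also have "\<dots> = (\<Sum>w\<in>B. \<Sum>z\<in>B. A x w * C w z * D z y)"
      by (rule sum.swap)
    also have "\<dots> = (\<Sum>w\<in>B. A x w * (\<Sum>z\<in>B. C w z * D z y))"
      by (simp add: sum_distrib_left mult.assoc)
    also have "\<dots> = mm B A (mm B C D) x y"
      using True by (auto simp: mm_def intro!: sum.cong)
    finally show ?thesis .
  qed (auto simp: mm_def)
qed

lemma sp_mm[simp]: "sp B (mm B A C)" by (auto simp: sp_def mm_def)
lemma sp_idm[simp]: "sp B (idm B)" by (auto simp: sp_def idm_def)
lemma sp_tp: "sp B A \<Longrightarrow> sp B (tp A)" by (auto simp: sp_def tp_def)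

lemma if01_mult[simp]: "(if P then 1 else 0) * (a::real) = (if P then a else 0)" by simp
lemma if01_mult2[simp]: "(a::real) * (if P then 1 else 0) = (if P then a else 0)" by simp

lemma mm_idm_left: assumes "finite B" "sp B A" shows "mm B (idm B) A = A"
proof (rule ext, rule ext)
  fix x y show "mm B (idm B) A x y = A x y"
    using assms by (cases "x\<in>B \<and> y\<in>B") (auto simp: mm_def idm_def sp_def)
qed

lemma mm_idm_right: assumes "finite B" "sp B A" shows "mm B A (idm B) = A"
proof (rule ext, rule ext)
  fix x y show "mm B A (idm B) x y = A x y"
    using assms by (cases "x\<in>B \<and> y\<in>B") (auto simp: mm_def idm_def sp_def)
qed

lemma tp_tp[simp]: "tp (tp A) = A" by (simp add: tp_def)
lemma tp_idm[simp]: "tp (idm B) = idm B" by (auto simp: tp_def idm_def intro!: ext)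
lemma tp_mm: "tp (mm B A C) = mm B (tp C) (tp A)"
  by (auto simp: tp_def mm_def mult.commute intro!: ext)

lemma tr_comm: "tr B (mm B A C) = tr B (mm B C A)"
proof -
  have "tr B (mm B A C) = (\<Sum>x\<in>B. \<Sum>z\<in>B. A x z * C z x)" by (simp add: tr_def mm_def)
  also have "\<dots> = (\<Sum>z\<in>B. \<Sum>x\<in>B. C z x * A x z)" by (subst sum.swap) (simp add: mult.commute)
  also have "\<dots> = tr B (mm B C A)" by (simp add: tr_def mm_def)
  finally show ?thesis .
qed

lemma frob_tr: "frob B A = tr B (mm B A (tp A))"
  by (simp add: frob_def tr_def mm_def tp_def power2_eq_square)

lemma ip_tr: "ip B A C = tr B (mm B A (tp C))"
  by (simp add: ip_def tr_def mm_def tp_def)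

lemma frob_tp: "frob B (tp A) = frob B A"
  unfolding frob_def tp_def by (rule sum.swap)

lemma frob_nonneg: "0 \<le> frob B A" by (simp add: frob_def sum_nonneg)

lemma ip_CS: "(ip B A C)^2 \<le> frob B A * frob B C"
proof -
  have "ip B A C = (\<Sum>p\<in>B\<times>B. A (fst p) (snd p) * C (fst p) (snd p))"
    by (simp add: ip_def sum.cartesian_product split_beta)
  moreover have "frob B A = (\<Sum>p\<in>B\<times>B. (A (fst p) (snd p))^2)"
    by (simp add: frob_def sum.cartesian_product split_beta)
  moreover have "frob B C = (\<Sum>p\<in>B\<times>B. (C (fst p) (snd p))^2)"
    by (simp add: frob_def sum.cartesian_product split_beta)
  ultimately show ?thesis using Cauchy_Schwarz_ineq_sum by metis
qed

lemma mv_mm: "x \<in> B \<Longrightarrow> mv B (mm B A C) v x = mv B A (mv B C v) x"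
proof -
  assume x: "x \<in> B"
  have "mv B (mm B A C) v x = (\<Sum>y\<in>B. (\<Sum>z\<in>B. A x z * C z y) * v y)"
    using x by (auto simp: mv_def mm_def intro!: sum.cong)
  also have "\<dots> = (\<Sum>y\<in>B. \<Sum>z\<in>B. A x z * C z y * v y)"
    by (simp add: sum_distrib_right)
  also have "\<dots> = (\<Sum>z\<in>B. \<Sum>y\<in>B. A x z * C z y * v y)"
    by (rule sum.swap)
  also have "\<dots> = (\<Sum>z\<in>B. A x z * (\<Sum>y\<in>B. C z y * v y))"
    by (simp add: sum_distrib_left mult.assoc)
  finally show ?thesis by (simp add: mv_def)
qed

lemma nsq_mv_mm: "nsq B (mv B (mm B A C) v) = nsq B (mv B A (mv B C v))"
  by (simp add: nsq_def mv_mm)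

lemma nsq_nonneg: "0 \<le> nsq B v" by (simp add: nsq_def sum_nonneg)

lemma bnd_mm: "bnd B A K1 \<Longrightarrow> bnd B C K2 \<Longrightarrow> 0 \<le> K1 \<Longrightarrow> bnd B (mm B A C) (K1*K2)"
  unfolding bnd_def nsq_mv_mm
  by (metis (no_types, opaque_lifting) mult.assoc mult_left_mono order_trans)

lemma lbnd_mm: "lbnd B A K1 \<Longrightarrow> lbnd B C K2 \<Longrightarrow> 0 \<le> K1 \<Longrightarrow> lbnd B (mm B A C) (K1*K2)"
  unfolding lbnd_def nsq_mv_mm
  by (metis (no_types, opaque_lifting) mult.assoc mult_left_mono order_trans)

lemma mv_idm: "finite B \<Longrightarrow> x \<in> B \<Longrightarrow> mv B (idm B) v x = v x"
  by (simp add: mv_def idm_def)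

lemma nsq_mv_idm: "finite B \<Longrightarrow> nsq B (mv B (idm B) v) = nsq B v"
  by (simp add: nsq_def mv_idm)

lemma bnd_idm: "finite B \<Longrightarrow> bnd B (idm B) 1" by (simp add: bnd_def nsq_mv_idm)
lemma lbnd_idm: "finite B \<Longrightarrow> lbnd B (idm B) 1" by (simp add: lbnd_def nsq_mv_idm)

lemma bnd_mono: "bnd B A K \<Longrightarrow> K \<le> K' \<Longrightarrow> bnd B A K'"
  unfolding bnd_def by (meson mult_right_mono nsq_nonneg order_trans)

lemma mm_mv: "x\<in>B \<Longrightarrow> y\<in>B \<Longrightarrow> mm B A Q x y = mv B A (\<lambda>z. Q z y) x"
  by (simp add: mm_def mv_def)

lemma frob_mm_col: "frob B (mm B A Q) = (\<Sum>y\<in>B. nsq B (mv B A (\<lambda>z. Q z y)))"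
proof -
  have "frob B (mm B A Q) = (\<Sum>x\<in>B. \<Sum>y\<in>B. (mv B A (\<lambda>z. Q z y) x)^2)"
    unfolding frob_def by (intro sum.cong refl) (simp add: mm_mv)
  also have "\<dots> = (\<Sum>y\<in>B. nsq B (mv B A (\<lambda>z. Q z y)))"
    unfolding nsq_def by (rule sum.swap)
  finally show ?thesis .
qed

lemma frob_col: "frob B Q = (\<Sum>y\<in>B. nsq B (\<lambda>z. Q z y))"
  unfolding frob_def nsq_def by (rule sum.swap)

lemma bnd_frob: assumes "bnd B A K" shows "frob B (mm B A Q) \<le> K * frob B Q"
proof -
  have "frob B (mm B A Q) = (\<Sum>y\<in>B. nsq B (mv B A (\<lambda>z. Q z y)))" by (rule frob_mm_col)
  also have "\<dots> \<le> (\<Sum>y\<in>B. K * nsq B (\<lambda>z. Q z y))"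
    using assms unfolding bnd_def by (intro sum_mono) blast
  also have "\<dots> = K * frob B Q" by (simp add: frob_col sum_distrib_left)
  finally show ?thesis .
qed

lemma lbnd_frob: assumes "lbnd B A K" shows "K * frob B Q \<le> frob B (mm B A Q)"
proof -
  have "K * frob B Q = (\<Sum>y\<in>B. K * nsq B (\<lambda>z. Q z y))" by (simp add: frob_col sum_distrib_left)
  also have "\<dots> \<le> (\<Sum>y\<in>B. nsq B (mv B A (\<lambda>z. Q z y)))"
    using assms unfolding lbnd_def by (intro sum_mono) blast
  also have "\<dots> = frob B (mm B A Q)" by (rule frob_mm_col[symmetric])
  finally show ?thesis .
qed


lemma lprod_Nil[simp]: "lprod B [] = idm B" by (simp add: lprod_def)
lemma lprod_Cons[simp]: "lprod B (E#Es) = mm B E (lprod B Es)" by (simp add: lprod_def)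
lemma sp_lprod[simp]: "sp B (lprod B Es)" by (cases Es) auto

lemma mm_cong_right: "(\<And>x y. x\<in>B \<Longrightarrow> y\<in>B \<Longrightarrow> C x y = C' x y) \<Longrightarrow> mm B A C = mm B A C'"
  by (auto simp: mm_def intro!: ext sum.cong)
lemma mm_cong_left: "(\<And>x y. x\<in>B \<Longrightarrow> y\<in>B \<Longrightarrow> A x y = A' x y) \<Longrightarrow> mm B A C = mm B A' C"
  by (auto simp: mm_def intro!: ext sum.cong)

lemma mm_idm_val: "finite B \<Longrightarrow> x\<in>B \<Longrightarrow> y\<in>B \<Longrightarrow> mm B Y (idm B) x y = Y x y"
  by (simp add: mm_def idm_def)
lemma mm_idm_val2: "finite B \<Longrightarrow> x\<in>B \<Longrightarrow> y\<in>B \<Longrightarrow> mm B (idm B) Y x y = Y x y"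
  by (simp add: mm_def idm_def)

lemma mm_mm_idm: "finite B \<Longrightarrow> mm B X (mm B Y (idm B)) = mm B X Y"
  by (rule mm_cong_right) (simp add: mm_idm_val)

lemma lprod_append: "finite B \<Longrightarrow> lprod B (xs@ys) = mm B (lprod B xs) (lprod B ys)"
  by (induction xs) (auto simp: mm_idm_left mm_assoc)

lemma lprod_concat: "finite B \<Longrightarrow> lprod B (concat xss) = lprod B (map (lprod B) xss)"
  by (induction xss) (auto simp: lprod_append)

lemma tp_lprod: assumes "finite B" shows "tp (lprod B Es) = lprod B (rev (map tp Es))"
proof (induction Es)
  case (Cons E Es)
  have "tp (lprod B (E#Es)) = mm B (lprod B (rev (map tp Es))) (tp E)"
    by (simp add: tp_mm Cons)
  also have "\<dots> = mm B (lprod B (rev (map tp Es))) (mm B (tp E) (idm B))"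
    using assms by (simp add: mm_mm_idm)
  also have "\<dots> = lprod B (rev (map tp (E#Es)))"
    using assms by (simp add: lprod_append)
  finally show ?case .
qed simp

lemma bnd_lprod: "finite B \<Longrightarrow> (\<forall>E\<in>set Es. bnd B E K) \<Longrightarrow> 0 \<le> K \<Longrightarrow> bnd B (lprod B Es) (K ^ length Es)"
  by (induction Es) (auto simp: bnd_idm intro: bnd_mm)

lemma lbnd_lprod: "finite B \<Longrightarrow> (\<forall>E\<in>set Es. lbnd B E K) \<Longrightarrow> 0 \<le> K \<Longrightarrow> lbnd B (lprod B Es) (K ^ length Es)"
  by (induction Es) (auto simp: lbnd_idm intro: lbnd_mm)

lemma mpow_0[simp]: "mpow B G 0 = idm B" by (simp add: mpow_def)
lemma mpow_Suc: "mpow B G (Suc k) = mm B G (mpow B G k)" by (simp add: mpow_def)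
lemma sp_mpow[simp]: "sp B (mpow B G k)" by (simp add: mpow_def)
lemma mpow_add: "finite B \<Longrightarrow> mm B (mpow B G a) (mpow B G b) = mpow B G (a+b)"
  by (simp add: mpow_def replicate_add lprod_append)
lemma mpow_1: "finite B \<Longrightarrow> sp B G \<Longrightarrow> mpow B G 1 = G"
  by (simp add: mpow_def mm_idm_right)
lemma tp_mpow: "finite B \<Longrightarrow> tp G = G \<Longrightarrow> tp (mpow B G k) = mpow B G k"
  by (simp add: mpow_def tp_lprod)

lemma logconv:
  fixes f :: "nat \<Rightarrow> real"
  assumes nn: "\<And>t. t \<le> T \<Longrightarrow> 0 \<le> f t"
    and lc: "\<And>t. 0 < t \<Longrightarrow> t < T \<Longrightarrow> (f t)^2 \<le> f (t-1) * f (t+1)"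
  shows "t \<le> T \<Longrightarrow> f t \<le> max (f 0) (f T)"
proof (rule ccontr)
  assume tT: "t \<le> T" and nle: "\<not> f t \<le> max (f 0) (f T)"
  define m where "m = Max (f ` {0..T})"
  have fin: "finite (f ` {0..T})" by simp
  have ne: "f ` {0..T} \<noteq> {}" by auto
  have mge: "\<And>u. u \<le> T \<Longrightarrow> f u \<le> m" unfolding m_def using fin by (intro Max_ge) auto
  have "m \<in> f ` {0..T}" unfolding m_def using fin ne by (rule Max_in)
  then obtain u where u: "u \<le> T" "f u = m" by auto
  define s where "s = (LEAST u. u \<le> T \<and> f u = m)"
  have s: "s \<le> T \<and> f s = m" unfolding s_def by (rule LeastI[of _ u]) (use u in auto)
  have sl: "\<And>v. v < s \<Longrightarrow> \<not> (v \<le> T \<and> f v = m)" unfolding s_def using not_less_Least by blast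
  have mgt: "m > max (f 0) (f T)" using nle mge[OF tT] by linarith
  have s0: "s \<noteq> 0" using s mgt by (cases s) auto
  have sT: "s \<noteq> T" using s mgt by auto
  have mpos: "m > 0" using mgt nn[of 0] by auto
  have a: "f (s-1) < m" using sl[of "s-1"] mge[of "s-1"] s s0 by force
  have b: "f (s+1) \<le> m" using mge[of "s+1"] s sT by auto
  have c: "0 \<le> f (s-1)" using nn[of "s-1"] s by auto
  have "m^2 \<le> f (s-1) * f (s+1)" using lc[of s] s s0 sT by auto
  also have "\<dots> \<le> f (s-1) * m" using b c by (rule mult_left_mono)
  also have "\<dots> < m * m" using a mpos by (simp add: mult_strict_right_mono)
  finally show False by (simp add: power2_eq_square)
qed

locale core =
  fixes B :: "'a set" and C :: "'a \<Rightarrow> 'a \<Rightarrow> real"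
  assumes fin: "finite B" and spC: "sp B C"
begin

definition G where "G = mm B C (tp C)"
definition P where "P k = mpow B G k"
definition Q where "Q m = (if even m then P (m div 2) else mm B (P (m div 2)) C)"
definition Phi where "Phi U a b = tr B (mm B U (mm B (P a) (mm B (tp U) (P b))))"
definition Y where "Y U i j = mm B (mm B (tp (Q i)) U) (Q j)"

lemma tpG: "tp G = G" by (simp add: G_def tp_mm)
lemma spG: "sp B G" by (simp add: G_def)
lemma tpP: "tp (P k) = P k" by (simp add: P_def tp_mpow fin tpG)
lemma PP: "mm B (P a) (P b) = P (a+b)" by (simp add: P_def mpow_add fin)
lemma PP_r: "mm B (P a) (mm B (P b) X) = mm B (P (a+b)) X" by (simp flip: mm_assoc add: PP)
lemma GP: "mm B G (P k) = P (Suc k)" by (simp add: P_def mpow_Suc)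
lemma P1: "P 1 = G" using mpow_1[OF fin spG] by (simp add: P_def)
lemma P0: "P 0 = idm B" by (simp add: P_def)

lemma QQ: "mm B (Q m) (tp (Q m)) = P m"
proof (cases "even m")
  case True
  then obtain k where m: "m = 2*k" by auto
  show ?thesis by (simp add: Q_def m tpP PP flip: mult_2)
next
  case False
  then obtain k where m: "m = 2*k+1" using oddE by blast
  have "mm B (Q m) (tp (Q m)) = mm B (mm B (P k) C) (mm B (tp C) (P k))"
    by (simp add: Q_def m tp_mm tpP)
  also have "\<dots> = mm B (P k) (mm B G (P k))" by (simp add: mm_assoc G_def)
  also have "\<dots> = P m" by (simp add: GP PP m mult_2)
  finally show ?thesis .
qed

lemma QQ2: "mm B (Q (Suc (Suc m))) (tp (Q m)) = P (Suc m)"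
proof (cases "even m")
  case True
  then obtain k where m: "m = 2*k" by auto
  have "Suc (Suc m) = 2 * (k+1)" using m by simp
  then show ?thesis by (simp add: Q_def m tpP PP mult_2)
next
  case False
  then obtain k where m: "m = 2*k+1" using oddE by blast
  have e: "(Suc (Suc m)) div 2 = k + 1" "\<not> even (Suc (Suc m))" using m by auto
  have "mm B (Q (Suc (Suc m))) (tp (Q m)) = mm B (mm B (P (k+1)) C) (mm B (tp C) (P k))"
    using m e by (simp add: Q_def tp_mm tpP)
  also have "\<dots> = mm B (P (k+1)) (mm B G (P k))" by (simp add: mm_assoc G_def)
  also have "\<dots> = P (Suc m)" by (simp add: GP PP m mult_2)
  finally show ?thesis .
qed

lemma QQ2': "mm B (Q m) (tp (Q (Suc (Suc m)))) = P (Suc m)"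
proof -
  have "tp (mm B (Q (Suc (Suc m))) (tp (Q m))) = tp (P (Suc m))" by (simp add: QQ2)
  then show ?thesis by (simp add: tp_mm tpP)
qed

lemma QQ_r: "mm B (Q m) (mm B (tp (Q m)) X) = mm B (P m) X"
  by (simp flip: mm_assoc add: QQ)
lemma QQ2_r: "mm B (Q (Suc (Suc m))) (mm B (tp (Q m)) X) = mm B (P (Suc m)) X"
  by (simp flip: mm_assoc add: QQ2)

lemma tr_rot: "tr B (mm B A X) = tr B (mm B X A)" by (rule tr_comm)

lemma frobY: "frob B (Y U b a) = Phi U a b"
proof -
  have "frob B (Y U b a) = tr B (mm B (tp (Q b)) (mm B U (mm B (P a) (mm B (tp U) (Q b)))))"
    by (simp add: frob_tr Y_def tp_mm mm_assoc QQ_r)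
  also have "\<dots> = tr B (mm B (mm B U (mm B (P a) (mm B (tp U) (Q b)))) (tp (Q b)))"
    by (rule tr_rot)
  also have "\<dots> = Phi U a b"
    by (simp add: mm_assoc QQ Phi_def)
  finally show ?thesis .
qed

lemma ipY: "ip B (Y U i (Suc (Suc j))) (Y U (Suc (Suc i)) j) = Phi U (Suc j) (Suc i)"
proof -
  have "ip B (Y U i (Suc (Suc j))) (Y U (Suc (Suc i)) j) = tr B (mm B (tp (Q i)) (mm B U (mm B (P (Suc j)) (mm B (tp U) (Q (Suc (Suc i)))))))"
    by (simp add: ip_tr Y_def tp_mm mm_assoc QQ2_r)
  also have "\<dots> = tr B (mm B (mm B U (mm B (P (Suc j)) (mm B (tp U) (Q (Suc (Suc i)))))) (tp (Q i)))"
    by (rule tr_rot)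
  also have "\<dots> = Phi U (Suc j) (Suc i)"
    by (simp add: mm_assoc QQ2 Phi_def)
  finally show ?thesis .
qed

lemma ipY2: "tr B (mm B (P s) (mm B U (mm B (P r) V))) = ip B (Y U s r) (Y (tp V) s r)"
proof -
  have "ip B (Y U s r) (Y (tp V) s r) = tr B (mm B (tp (Q s)) (mm B U (mm B (P r) (mm B V (Q s)))))"
    by (simp add: ip_tr Y_def tp_mm mm_assoc QQ_r)
  also have "\<dots> = tr B (mm B (mm B U (mm B (P r) (mm B V (Q s)))) (tp (Q s)))"
    by (rule tr_rot)
  also have "\<dots> = tr B (mm B (mm B U (mm B (P r) V)) (P s))"
    by (simp add: mm_assoc QQ)
  also have "\<dots> = tr B (mm B (P s) (mm B U (mm B (P r) V)))"
    by (rule tr_rot)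
  finally show ?thesis by simp
qed

lemma trP_frob: "tr B (P m) = frob B (Q m)"
  by (simp add: frob_tr QQ)

lemma trP_nonneg: "0 \<le> tr B (P m)" by (simp add: trP_frob frob_nonneg)

lemma f_bound:
  assumes "sp B U" "bnd B U k" "bnd B (tp U) k" "t \<le> T"
  shows "Phi U (T - t) t \<le> k * tr B (P T)"
proof -
  define f where "f t = Phi U (T - t) t" for t
  have nn: "0 \<le> f t" for t unfolding f_def frobY[symmetric] by (rule frob_nonneg)
  have lc: "(f t)^2 \<le> f (t-1) * f (t+1)" if "0 < t" "t < T" for t
  proof -
    define i j where "i = t - 1" and "j = T - t - 1"
    have ij: "t = i + 1" "T - t = j + 1" using that unfolding i_def j_def by arith+
    have e: "T - t = Suc j" "T - (t-1) = Suc (Suc j)" "t - 1 = i" "T - (t+1) = j" "t+1 = Suc (Suc i)" "t = Suc i" "T - Suc (Suc i) = j" "T - i = Suc (Suc j)"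
      using ij that by arith+
    have "f t = Phi U (Suc j) (Suc i)" unfolding f_def e(1) by (simp add: e(6))
    also have "\<dots> = ip B (Y U i (Suc (Suc j))) (Y U (Suc (Suc i)) j)" by (simp add: ipY)
    finally have "(f t)^2 \<le> frob B (Y U i (Suc (Suc j))) * frob B (Y U (Suc (Suc i)) j)" by (simp add: ip_CS)
    also have "\<dots> = f (t-1) * f (t+1)" unfolding frobY f_def using e by simp
    finally show ?thesis .
  qed
  have f0: "f 0 \<le> k * tr B (P T)"
  proof -
    have "f 0 = frob B (Y U 0 T)" by (simp add: f_def frobY)
    also have "\<dots> = frob B (mm B U (Q T))"
      by (simp add: Y_def Q_def P0 mm_idm_left fin assms(1))
    also have "\<dots> \<le> k * frob B (Q T)" using assms(2) by (rule bnd_frob)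
    finally show ?thesis by (simp add: trP_frob)
  qed
  have fT: "f T \<le> k * tr B (P T)"
  proof -
    have "f T = frob B (Y U T 0)" by (simp add: f_def frobY)
    also have "\<dots> = frob B (mm B (tp (Q T)) U)"
      by (simp add: Y_def Q_def P0 mm_idm_right fin)
    also have "\<dots> = frob B (mm B (tp U) (Q T))" by (metis frob_tp tp_mm tp_tp)
    also have "\<dots> \<le> k * frob B (Q T)" using assms(3) by (rule bnd_frob)
    finally show ?thesis by (simp add: trP_frob)
  qed
  have "f t \<le> max (f 0) (f T)" using logconv[of T f, OF _ lc] nn assms(4) by blast
  then show ?thesis using f0 fT unfolding f_def by simp
qed

lemma main_bound:
  assumes "sp B U" "bnd B U k" "bnd B (tp U) k" "sp B V" "bnd B V k" "bnd B (tp V) k" "0 \<le> k"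
  shows "\<bar>tr B (mm B (P s) (mm B U (mm B (P r) V)))\<bar> \<le> k * tr B (P (s+r))"
proof -
  have a: "frob B (Y U s r) \<le> k * tr B (P (s+r))"
    using f_bound[OF assms(1-3), of s "s+r"] by (simp add: frobY)
  have b: "frob B (Y (tp V) s r) \<le> k * tr B (P (s+r))"
    using f_bound[of "tp V" k s "s+r"] assms(4-6) by (simp add: frobY sp_tp)
  have "(tr B (mm B (P s) (mm B U (mm B (P r) V))))^2 \<le> frob B (Y U s r) * frob B (Y (tp V) s r)"
    unfolding ipY2 by (rule ip_CS)
  also have "\<dots> \<le> (k * tr B (P (s+r)))^2" unfolding power2_eq_square
    using a b mult_nonneg_nonneg[OF assms(7) trP_nonneg] by (intro mult_mono) (auto simp: frob_nonneg)
  finally have "(tr B (mm B (P s) (mm B U (mm B (P r) V))))^2 \<le> (k * tr B (P (s+r)))^2" .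
  then show ?thesis
    by (metis abs_le_square_iff abs_of_nonneg mult_nonneg_nonneg assms(7) trP_nonneg)
qed

lemma lower_step:
  assumes "lbnd B (tp C) l"
  shows "l * tr B (P m) \<le> tr B (P (Suc m))"
proof -
  have "tr B (P (Suc m)) = tr B (mm B (P m) G)"
    by (metis PP P1 Suc_eq_plus1)
  also have "\<dots> = tr B (mm B (Q m) (mm B (tp (Q m)) (mm B C (tp C))))"
    by (simp add: mm_assoc QQ_r G_def)
  also have "\<dots> = tr B (mm B (tp C) (mm B (Q m) (mm B (tp (Q m)) C)))"
    by (subst tr_rot) (simp add: mm_assoc)
  also have "\<dots> = frob B (mm B (tp C) (Q m))"
    by (simp add: frob_tr tp_mm mm_assoc)
  finally have "tr B (P (Suc m)) = frob B (mm B (tp C) (Q m))" .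
  moreover have "l * frob B (Q m) \<le> frob B (mm B (tp C) (Q m))" using assms by (rule lbnd_frob)
  ultimately show ?thesis by (simp add: trP_frob)
qed

end


definition LS :: "'a set \<Rightarrow> nat \<Rightarrow> 'a list set" where
  "LS B k = {xs. length xs = k \<and> set xs \<subseteq> B}"

lemma LS_0: "LS B 0 = {[]}" by (auto simp: LS_def)

lemma LS_Suc: "LS B (Suc k) = (\<lambda>(x,ys). x#ys) ` (B \<times> LS B k)"
proof
  show "LS B (Suc k) \<subseteq> (\<lambda>(x,ys). x#ys) ` (B \<times> LS B k)"
  proof
    fix xs assume "xs \<in> LS B (Suc k)"
    then obtain x ys where "xs = x#ys" "x\<in>B" "ys \<in> LS B k"
      unfolding LS_def by (cases xs) auto
    then show "xs \<in> (\<lambda>(x,ys). x#ys) ` (B \<times> LS B k)" by force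
  qed
qed (auto simp: LS_def)

lemma LS_Suc_sum: "(\<Sum>xs\<in>LS B (Suc k). g xs) = (\<Sum>x\<in>B. \<Sum>ys\<in>LS B k. g (x#ys))"
proof -
  have inj: "inj_on (\<lambda>(x,ys). x#ys) (B \<times> LS B k)" by (auto simp: inj_on_def)
  have "(\<Sum>xs\<in>LS B (Suc k). g xs) = (\<Sum>p\<in>B \<times> LS B k. g ((\<lambda>(x,ys). x#ys) p))"
    unfolding LS_Suc by (rule sum.reindex[OF inj, unfolded comp_def])
  also have "\<dots> = (\<Sum>x\<in>B. \<Sum>ys\<in>LS B k. g (x#ys))"
    by (simp add: sum.cartesian_product split_beta)
  finally show ?thesis .
qed

lemma path_sum:
  assumes fin: "finite B"
  shows "Es \<noteq> [] \<Longrightarrow> x\<in>B \<Longrightarrow> y\<in>B \<Longrightarrow> lprod B Es x y =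
    (\<Sum>xs\<in>LS B (length Es - 1). \<Prod>m<length Es. (Es!m) ((x#xs)!m) ((xs@[y])!m))"
proof (induction Es arbitrary: x)
  case Nil then show ?case by simp
next
  case (Cons E Es)
  show ?case
  proof (cases "Es = []")
    case True
    then show ?thesis using Cons.prems fin by (simp add: LS_0 mm_idm_val)
  next
    case False
    then obtain k where k: "length Es = Suc k" by (cases Es) auto
    have "lprod B (E#Es) x y = (\<Sum>z\<in>B. E x z * lprod B Es z y)"
      using Cons.prems by (simp add: mm_def)
    also have "\<dots> = (\<Sum>z\<in>B. E x z * (\<Sum>ys\<in>LS B k. \<Prod>m<Suc k. (Es!m) ((z#ys)!m) ((ys@[y])!m)))"
      using Cons.IH[OF False _ Cons.prems(3)] k by simp
    also have "\<dots> = (\<Sum>z\<in>B. \<Sum>ys\<in>LS B k. \<Prod>m<Suc (Suc k). ((E#Es)!m) ((x#z#ys)!m) (((z#ys)@[y])!m))"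
      by (simp add: sum_distrib_left prod.lessThan_Suc_shift del: prod.lessThan_Suc)
    also have "\<dots> = (\<Sum>xs\<in>LS B (Suc k). \<Prod>m<Suc (Suc k). ((E#Es)!m) ((x#xs)!m) ((xs@[y])!m))"
      by (simp add: LS_Suc_sum)
    finally show ?thesis using k by simp
  qed
qed

lemma trace_sum:
  assumes fin: "finite B" and ne: "Es \<noteq> []"
  shows "tr B (lprod B Es) =
    (\<Sum>ss\<in>LS B (length Es). \<Prod>m<length Es. (Es!m) (ss!m) (ss!((m+1) mod length Es)))"
proof -
  obtain k where k: "length Es = Suc k" using ne by (cases Es) auto
  have "tr B (lprod B Es) = (\<Sum>x\<in>B. \<Sum>xs\<in>LS B k. \<Prod>m<Suc k. (Es!m) ((x#xs)!m) ((xs@[x])!m))"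
    unfolding tr_def using path_sum[OF fin ne] k by simp
  also have "\<dots> = (\<Sum>x\<in>B. \<Sum>xs\<in>LS B k. \<Prod>m<Suc k. (Es!m) ((x#xs)!m) ((x#xs)!((m+1) mod Suc k)))"
  proof (intro sum.cong refl prod.cong)
    fix x xs m assume xs: "xs \<in> LS B k" and m: "m \<in> {..<Suc k}"
    have l: "length xs = k" using xs by (simp add: LS_def)
    show "(Es!m) ((x#xs)!m) ((xs@[x])!m) = (Es!m) ((x#xs)!m) ((x#xs)!((m+1) mod Suc k))"
    proof (cases "m < k")
      case True
      then show ?thesis using l by (simp add: nth_append)
    next
      case False
      then have "m = k" using m by auto
      then show ?thesis using l by (simp add: nth_append)
    qed
  qed
  also have "\<dots> = (\<Sum>ss\<in>LS B (Suc k). \<Prod>m<Suc k. (Es!m) (ss!m) (ss!((m+1) mod Suc k)))"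
    by (simp add: LS_Suc_sum)
  finally show ?thesis using k by simp
qed


context core
begin

lemma lprod_range_const:
  "(\<And>x. i \<le> x \<Longrightarrow> x < i + k \<Longrightarrow> g x = G) \<Longrightarrow> lprod B (map g [i..<i+k]) = P k"
proof (induction k)
  case 0 then show ?case by (simp add: P0)
next
  case (Suc k)
  have "lprod B (map g [i..<i + Suc k]) = mm B (lprod B (map g [i..<i+k])) (mm B (g (i+k)) (idm B))"
    by (simp add: lprod_append fin)
  also have "\<dots> = mm B (P k) G" using Suc by (simp add: mm_mm_idm fin)
  also have "\<dots> = P (Suc k)" by (metis PP P1 Suc_eq_plus1)
  finally show ?case .
qed

lemma lprod_range_split:
  "i \<le> j \<Longrightarrow> j \<le> k \<Longrightarrow> lprod B (map g [i..<k]) = mm B (lprod B (map g [i..<j])) (lprod B (map g [j..<k]))"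
  by (metis le_add_diff_inverse lprod_append fin map_append upt_add_eq_append)

lemma lprod_range_one: "lprod B (map g [j..<Suc j]) = mm B (g j) (idm B)" by simp

lemma lower4:
  assumes "lbnd B (tp C) l" "1/4 \<le> l"
  shows "tr B (P m) \<le> 4 * tr B (P (Suc m))"
proof -
  have "(1/4) * tr B (P m) \<le> l * tr B (P m)" using assms(2) trP_nonneg by (rule mult_right_mono)
  also have "\<dots> \<le> tr B (P (Suc m))" using assms(1) by (rule lower_step)
  finally show ?thesis by simp
qed

lemma two_block_bound:
  assumes lb: "lbnd B (tp C) l" "1/4 \<le> l"
    and kk: "1 \<le> k" "k \<le> 16"
    and gG: "\<And>j. j \<noteq> c1 \<Longrightarrow> j \<noteq> c2 \<Longrightarrow> g j = G"
    and c: "c1 \<le> c2" "c2 < L"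
    and gb: "\<And>j. sp B (g j) \<and> bnd B (g j) k \<and> bnd B (tp (g j)) k"
  shows "tr B (lprod B (map g [0..<L])) \<le> 256 * tr B (P L)"
proof (cases "c1 = c2")
  case True
  have e1: "lprod B (map g [0..<c1]) = P c1"
    using lprod_range_const[of 0 c1 g] gG True by simp
  have e2: "lprod B (map g [Suc c1..<L]) = P (L - 1 - c1)"
    using lprod_range_const[of "Suc c1" "L - 1 - c1" g] gG True c by simp
  have "lprod B (map g [0..<L]) = mm B (lprod B (map g [0..<c1])) (lprod B (map g [c1..<L]))"
    using c by (intro lprod_range_split) auto
  also have "lprod B (map g [c1..<L]) = mm B (lprod B (map g [c1..<Suc c1])) (lprod B (map g [Suc c1..<L]))"
    using c True by (intro lprod_range_split) auto
  finally have "lprod B (map g [0..<L]) = mm B (P c1) (mm B (mm B (g c1) (idm B)) (P (L - 1 - c1)))"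
    using e1 e2 by simp
  also have "\<dots> = mm B (P c1) (mm B (g c1) (P (L - 1 - c1)))"
    by (simp add: mm_idm_right fin gb)
  finally have eq: "lprod B (map g [0..<L]) = mm B (P c1) (mm B (g c1) (P (L - 1 - c1)))" .
  have "tr B (lprod B (map g [0..<L])) = tr B (mm B (mm B (g c1) (P (L - 1 - c1))) (P c1))"
    unfolding eq by (rule tr_rot)
  also have "\<dots> = tr B (mm B (g c1) (P (L - 1 - c1 + c1)))" by (simp add: mm_assoc PP)
  also have "\<dots> = tr B (mm B (P (L - 1 - c1 + c1)) (mm B (g c1) (mm B (P 0) (idm B))))"
    by (subst tr_rot) (simp add: P0 mm_idm_right fin gb)
  also have "\<dots> \<le> k * tr B (P (L - 1 - c1 + c1 + 0))"
  proof -
    have bi: "bnd B (idm B) k" using bnd_mono[OF bnd_idm[OF fin] kk(1)] .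
    have "\<bar>tr B (mm B (P (L - 1 - c1 + c1)) (mm B (g c1) (mm B (P 0) (idm B))))\<bar> \<le> k * tr B (P (L - 1 - c1 + c1 + 0))"
      by (rule main_bound) (use gb bi kk in auto)
    then show ?thesis by linarith
  qed
  also have "L - 1 - c1 + c1 + 0 = L - 1" using c by simp
  also have "k * tr B (P (L - 1)) \<le> 16 * (4 * tr B (P L))"
  proof -
    have "tr B (P (L-1)) \<le> 4 * tr B (P (Suc (L-1)))" by (rule lower4[OF lb])
    then have "tr B (P (L-1)) \<le> 4 * tr B (P L)" using c by simp
    then show ?thesis using kk trP_nonneg[of "L-1"] by (intro mult_mono) auto
  qed
  also have "\<dots> \<le> 256 * tr B (P L)" using trP_nonneg[of L] by simp
  finally show ?thesis .
next
  case False
  then have c12: "c1 < c2" using c by simp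
  have e1: "lprod B (map g [0..<c1]) = P c1"
    using lprod_range_const[of 0 c1 g] gG c12 by simp
  have e2: "lprod B (map g [Suc c1..<c2]) = P (c2 - 1 - c1)"
    using lprod_range_const[of "Suc c1" "c2 - 1 - c1" g] gG c12 by simp
  have e3: "lprod B (map g [Suc c2..<L]) = P (L - 1 - c2)"
    using lprod_range_const[of "Suc c2" "L - 1 - c2" g] gG c12 c by simp
  have "lprod B (map g [0..<L]) = mm B (lprod B (map g [0..<c1])) (lprod B (map g [c1..<L]))"
    using c by (intro lprod_range_split) auto
  also have "lprod B (map g [c1..<L]) = mm B (lprod B (map g [c1..<Suc c1])) (lprod B (map g [Suc c1..<L]))"
    using c c12 by (intro lprod_range_split) auto
  also have "lprod B (map g [Suc c1..<L]) = mm B (lprod B (map g [Suc c1..<c2])) (lprod B (map g [c2..<L]))"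
    using c c12 by (intro lprod_range_split) auto
  also have "lprod B (map g [c2..<L]) = mm B (lprod B (map g [c2..<Suc c2])) (lprod B (map g [Suc c2..<L]))"
    using c c12 by (intro lprod_range_split) auto
  finally have "lprod B (map g [0..<L]) = mm B (P c1) (mm B (mm B (g c1) (idm B))
      (mm B (P (c2 - 1 - c1)) (mm B (mm B (g c2) (idm B)) (P (L - 1 - c2)))))"
    using e1 e2 e3 by simp
  also have "\<dots> = mm B (P c1) (mm B (g c1) (mm B (P (c2 - 1 - c1)) (mm B (g c2) (P (L - 1 - c2)))))"
    by (simp add: mm_idm_right fin gb)
  finally have eq: "lprod B (map g [0..<L]) = mm B (P c1) (mm B (g c1) (mm B (P (c2 - 1 - c1)) (mm B (g c2) (P (L - 1 - c2)))))" .
  have "tr B (lprod B (map g [0..<L])) = tr B (mm B (mm B (g c1) (mm B (P (c2 - 1 - c1)) (mm B (g c2) (P (L - 1 - c2))))) (P c1))"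
    unfolding eq by (rule tr_rot)
  also have "\<dots> = tr B (mm B (mm B (g c1) (mm B (P (c2 - 1 - c1)) (g c2))) (P (L - 1 - c2 + c1)))"
    by (simp add: mm_assoc PP)
  also have "\<dots> = tr B (mm B (P (L - 1 - c2 + c1)) (mm B (g c1) (mm B (P (c2 - 1 - c1)) (g c2))))"
    by (rule tr_rot)
  also have "\<dots> \<le> k * tr B (P (L - 1 - c2 + c1 + (c2 - 1 - c1)))"
  proof -
    have "\<bar>tr B (mm B (P (L - 1 - c2 + c1)) (mm B (g c1) (mm B (P (c2 - 1 - c1)) (g c2))))\<bar> \<le> k * tr B (P (L - 1 - c2 + c1 + (c2 - 1 - c1)))"
      by (rule main_bound) (use gb kk in auto)
    then show ?thesis by linarith
  qed
  also have "L - 1 - c2 + c1 + (c2 - 1 - c1) = L - 2" using c c12 by simp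
  also have "k * tr B (P (L - 2)) \<le> 16 * (16 * tr B (P L))"
  proof -
    have "tr B (P (L-2)) \<le> 4 * tr B (P (Suc (L-2)))" by (rule lower4[OF lb])
    also have "tr B (P (Suc (L-2))) \<le> 4 * tr B (P (Suc (Suc (L-2))))" by (rule lower4[OF lb])
    also have "Suc (Suc (L-2)) = L" using c c12 by simp
    finally have "tr B (P (L-2)) \<le> 16 * tr B (P L)" by simp
    then show ?thesis using kk trP_nonneg[of "L-2"] by (intro mult_mono) auto
  qed
  also have "\<dots> = 256 * tr B (P L)" by simp
  finally show ?thesis .
qed

end


lemma flip_flip[simp]: "flip F (flip F s) = s" by (simp add: flip_def)
lemma flip_empty[simp]: "flip {} s = s" by (simp add: flip_def)
lemma flip_in: "F \<subseteq> {..<n} \<Longrightarrow> s \<in> basis_states n \<Longrightarrow> flip F s \<in> basis_states n"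
  by (auto simp: flip_def basis_states_def)
lemma flip_eq_iff: "(t = flip F s) = (s = flip F t)" by auto

lemma finite_basis: "finite (basis_states n)"
proof -
  have "basis_states n \<subseteq> (\<lambda>A i. i \<in> A) ` Pow {..<n}"
  proof
    fix s assume s: "s \<in> basis_states n"
    have "s = (\<lambda>i. i \<in> {i. i < n \<and> s i})" using s by (auto simp: basis_states_def intro!: ext) (meson not_le)
    then show "s \<in> (\<lambda>A i. i \<in> A) ` Pow {..<n}" by blast
  qed
  then show ?thesis by (rule finite_subset) simp
qed

lemma sum_flip: "F \<subseteq> {..<n} \<Longrightarrow> (\<Sum>s\<in>basis_states n. h (flip F s)) = (\<Sum>s\<in>basis_states n. h s)"
  by (rule sum.reindex_bij_witness[of _ "flip F" "flip F"]) (auto simp: flip_in)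

fun valid :: "nat \<Rightarrow> trot_op \<Rightarrow> bool" where
  "valid n (OneQ i) = (i < n)"
| "valid n (TwoQ i j) = (i < j \<and> j < n)"

lemma valid_acts: "valid n ot \<Longrightarrow> acts ot \<subseteq> {..<n}" by (cases ot) auto

lemma valid_Cseq: "ot \<in> set (Cseq n) \<Longrightarrow> valid n ot"
  by (auto simp: Cseq_def qpairs_def)

lemma set_ops: "set (ops n L) \<subseteq> set (Cseq n)"
  by (auto simp: ops_def)

lemma valid_ops: "ot \<in> set (ops n L) \<Longrightarrow> valid n ot"
  using set_ops valid_Cseq by blast

lemma elem_sym: "elem dl a b d ot s t = elem dl a b d ot t s"
proof (cases ot)
  case (OneQ i) then show ?thesis by auto
next
  case (TwoQ i j)
  show ?thesis
  proof (cases "s = t")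
    case False
    have "t = flip {i,j} s \<longleftrightarrow> s = flip {i,j} t" by auto
    moreover have "t = flip {i,j} s \<Longrightarrow> (s i = s j) = (t i = t j)" by (auto simp: flip_def)
    ultimately show ?thesis using TwoQ False by auto
  qed (use TwoQ in auto)
qed

locale qsys =
  fixes n L :: nat and dl :: real and a b :: "nat \<Rightarrow> nat \<Rightarrow> real" and d :: "nat \<Rightarrow> real"
  assumes n1: "1 \<le> n" and L1: "1 \<le> L" and dpos: "0 \<le> dl"
    and dNC: "real (length (Cseq n)) * dl \<le> 1/2"
    and ab: "\<forall>i j. i < j \<and> j < n \<longrightarrow> \<bar>b i j\<bar> \<le> a i j \<and> a i j \<le> 1/2"
    and dd: "\<forall>i<n. \<bar>d i\<bar> \<le> 1"
begin

abbreviation "Bs \<equiv> basis_states n"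
definition Er where "Er ot = (\<lambda>s t. if s \<in> Bs \<and> t \<in> Bs then elem dl a b d ot s t else 0)"
definition Xf where "Xf F = (\<lambda>s t. if s \<in> Bs \<and> t \<in> Bs \<and> s = flip F t then 1 else (0::real))"

lemma finB: "finite Bs" by (rule finite_basis)

lemma NC1: "1 \<le> length (Cseq n)" using n1 by (simp add: Cseq_def)
lemma dl_half: "dl \<le> 1/2"
proof -
  have "dl \<le> real (length (Cseq n)) * dl" using NC1 dpos by (simp add: mult_le_cancel_right1)
  then show ?thesis using dNC by linarith
qed

lemma sp_Er[simp]: "sp Bs (Er ot)" by (auto simp: sp_def Er_def)
lemma sp_Xf[simp]: "sp Bs (Xf F)" by (auto simp: sp_def Xf_def split: if_splits)
lemma tp_Er: "tp (Er ot) = Er ot" by (auto simp: tp_def Er_def elem_sym intro!: ext)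
lemma tp_Xf: "tp (Xf F) = Xf F" by (auto simp: tp_def Xf_def intro!: ext)
lemma Xf_empty: "Xf {} = idm Bs" by (auto simp: Xf_def idm_def intro!: ext)

lemma mm_Er_Xf: "F \<subseteq> {..<n} \<Longrightarrow> s \<in> Bs \<Longrightarrow> t \<in> Bs \<Longrightarrow> mm Bs (Er ot) (Xf F) s t = elem dl a b d ot s (flip F t)"
  by (simp add: mm_def Er_def Xf_def flip_in finB if_distrib[of "\<lambda>x. _ * x"] cong: if_cong)

lemma mv_Xf: assumes "F \<subseteq> {..<n}" "s \<in> Bs" shows "mv Bs (Xf F) v s = v (flip F s)"
proof -
  have "mv Bs (Xf F) v s = (\<Sum>y\<in>Bs. if y = flip F s then v y else 0)"
    unfolding mv_def Xf_def using assms by (intro sum.cong refl) auto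
  also have "\<dots> = v (flip F s)" using assms by (simp add: finB flip_in)
  finally show ?thesis .
qed

lemma bnd_Xf: "F \<subseteq> {..<n} \<Longrightarrow> bnd Bs (Xf F) 1"
  unfolding bnd_def nsq_def by (simp add: mv_Xf sum_flip[of F n "\<lambda>s. (v s)^2" for v])

end


context qsys
begin

lemma mv_one: assumes "s \<in> Bs"
  shows "mv Bs (Er (OneQ i)) v s = (1 - dl * d i * (if s i then -1 else 1)) * v s"
proof -
  have "mv Bs (Er (OneQ i)) v s = (\<Sum>t\<in>Bs. if t = s then (1 - dl * d i * (if s i then -1 else 1)) * v s else 0)"
    unfolding mv_def Er_def using assms by (intro sum.cong refl) auto
  also have "\<dots> = (1 - dl * d i * (if s i then -1 else 1)) * v s" using assms by (simp add: finB)
  finally show ?thesis .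
qed

lemma one_bounds: assumes "i < n"
  shows "bnd Bs (Er (OneQ i)) ((1+dl)^2) \<and> lbnd Bs (Er (OneQ i)) ((1-dl)^2)"
proof -
  have c: "(1-dl)^2 \<le> (1 - dl * d i * (if s i then -1 else 1))^2 \<and> (1 - dl * d i * (if s i then -1 else 1))^2 \<le> (1+dl)^2" for s
  proof -
    define e where "e = dl * d i * (if s i then -1 else 1)"
    have di: "\<bar>d i\<bar> \<le> 1" using dd assms by auto
    have "\<bar>e\<bar> = dl * \<bar>d i\<bar>" unfolding e_def using dpos by (simp add: abs_mult)
    also have "\<dots> \<le> dl * 1" using di dpos by (rule mult_left_mono)
    finally have "\<bar>e\<bar> \<le> dl" by simp
    then have "1 - dl \<le> 1 - e" "1 - e \<le> 1 + dl" "0 \<le> 1 - dl" using dl_half by auto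
    then show ?thesis unfolding e_def[symmetric]
      by (simp add: power_mono abs_le_square_iff[symmetric] power2_le_iff_abs_le)
  qed
  have u: "nsq Bs (mv Bs (Er (OneQ i)) v) \<le> (1+dl)^2 * nsq Bs v" for v
    unfolding nsq_def sum_distrib_left
    by (intro sum_mono) (simp add: mv_one power_mult_distrib c mult_right_mono)
  have l: "(1-dl)^2 * nsq Bs v \<le> nsq Bs (mv Bs (Er (OneQ i)) v)" for v
    unfolding nsq_def sum_distrib_left
    by (intro sum_mono) (simp add: mv_one power_mult_distrib c mult_right_mono)
  show ?thesis using u l by (simp add: bnd_def lbnd_def)
qed

definition wt where "wt i j s = a i j + (if s i = s j then b i j else - b i j)"

lemma wt_flip: "i \<noteq> j \<Longrightarrow> wt i j (flip {i,j} s) = wt i j s"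
  by (simp add: wt_def flip_def)

lemma wt_range: "i < j \<Longrightarrow> j < n \<Longrightarrow> 0 \<le> wt i j s \<and> wt i j s \<le> 1"
proof -
  assume "i < j" "j < n"
  then have "\<bar>b i j\<bar> \<le> a i j" "a i j \<le> 1/2" using ab by auto
  then show ?thesis by (auto simp: wt_def abs_le_iff)
qed

lemma flip_neq: "i \<in> F \<Longrightarrow> flip F s \<noteq> s"
  by (auto simp: flip_def fun_eq_iff)

lemma mv_two: assumes "s \<in> Bs" "i < j" "j < n"
  shows "mv Bs (Er (TwoQ i j)) v s = v s + dl * wt i j s * v (flip {i,j} s)"
proof -
  have fs: "flip {i,j} s \<in> Bs" using assms flip_in[of "{i,j}" n s] by auto
  have ne: "flip {i,j} s \<noteq> s" by (rule flip_neq[of i]) simp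
  have "mv Bs (Er (TwoQ i j)) v s = (\<Sum>t\<in>Bs. (if t = s then v s else 0) + (if t = flip {i,j} s then dl * wt i j s * v (flip {i,j} s) else 0))"
    unfolding mv_def Er_def using assms ne by (intro sum.cong refl) (auto simp: wt_def)
  also have "\<dots> = v s + dl * wt i j s * v (flip {i,j} s)" using assms fs by (simp add: finB sum.distrib)
  finally show ?thesis .
qed

lemma two_bounds: assumes "i < j" "j < n"
  shows "bnd Bs (Er (TwoQ i j)) ((1+dl)^2) \<and> lbnd Bs (Er (TwoQ i j)) ((1-dl)^2)"
proof -
  have F: "{i,j} \<subseteq> {..<n}" using assms by auto
  have ij: "i \<noteq> j" using assms by simp
  let ?f = "flip {i,j}"
  have pu: "(x + dl * w * y)^2 \<le> (1 + dl + 0) * x^2 + (dl + dl^2) * y^2"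
    if "0 \<le> w" "w \<le> 1" for x y w :: real
  proof -
    have h: "2 * x * y \<le> x^2 + y^2" using zero_le_power2[of "x-y"] by (simp add: power2_diff)
    have "w * (2 * x * y) \<le> w * (x^2 + y^2)" using h that(1) by (rule mult_left_mono)
    then have "2 * w * x * y \<le> w * (x^2 + y^2)" by (simp add: algebra_simps)
    also have "\<dots> \<le> x^2 + y^2" using that by (simp add: mult_left_le_one_le add_nonneg_nonneg)
    finally have a1: "2 * w * x * y \<le> x^2 + y^2" .
    have a2: "w^2 * y^2 \<le> y^2" using that by (simp add: mult_left_le_one_le power_le_one)
    have "(x + dl * w * y)^2 = x^2 + dl * (2 * w * x * y) + dl^2 * (w^2 * y^2)"
      by (simp add: power2_eq_square algebra_simps)
    also have "\<dots> \<le> x^2 + dl * (x^2 + y^2) + dl^2 * y^2"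
      using a1 a2 dpos by (intro add_mono mult_left_mono) auto
    finally show ?thesis by (simp add: algebra_simps)
  qed
  have pl: "(x + dl * w * y)^2 \<ge> x^2 - dl * w * x^2 - dl * w * y^2 + dl^2 * w^2 * y^2"
    if "0 \<le> w" for x y w :: real
  proof -
    have h: "- (x^2 + y^2) \<le> 2 * x * y" using zero_le_power2[of "x+y"] by (simp add: power2_sum)
    have "w * (- (x^2 + y^2)) \<le> w * (2 * x * y)" using h that by (rule mult_left_mono)
    then have "- (w * (x^2 + y^2)) \<le> 2 * w * x * y" by (simp add: algebra_simps)
    then have "dl * (- (w * (x^2 + y^2))) \<le> dl * (2 * w * x * y)" using dpos by (rule mult_left_mono)
    then show ?thesis by (simp add: power2_eq_square algebra_simps)
  qed
  have u: "nsq Bs (mv Bs (Er (TwoQ i j)) v) \<le> (1+dl)^2 * nsq Bs v" for v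
  proof -
    have "nsq Bs (mv Bs (Er (TwoQ i j)) v) = (\<Sum>s\<in>Bs. (v s + dl * wt i j s * v (?f s))^2)"
      unfolding nsq_def using assms by (intro sum.cong refl) (simp add: mv_two)
    also have "\<dots> \<le> (\<Sum>s\<in>Bs. (1 + dl + 0) * (v s)^2 + (dl + dl^2) * (v (?f s))^2)"
      using wt_range[OF assms] by (intro sum_mono pu) auto
    also have "\<dots> = (1 + dl) * nsq Bs v + (dl + dl^2) * (\<Sum>s\<in>Bs. (v (?f s))^2)"
      by (simp add: sum.distrib sum_distrib_left nsq_def)
    also have "(\<Sum>s\<in>Bs. (v (?f s))^2) = nsq Bs v"
      unfolding nsq_def by (rule sum_flip[OF F])
    finally show ?thesis by (simp add: power2_eq_square algebra_simps)
  qed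
  have l: "(1-dl)^2 * nsq Bs v \<le> nsq Bs (mv Bs (Er (TwoQ i j)) v)" for v
  proof -
    let ?w = "wt i j"
    have r1: "(\<Sum>s\<in>Bs. ?w s * (v (?f s))^2) = (\<Sum>s\<in>Bs. ?w s * (v s)^2)"
      using sum_flip[OF F, of "\<lambda>s. ?w s * (v s)^2"] by (simp add: wt_flip[OF ij])
    have r2: "(\<Sum>s\<in>Bs. (?w s)^2 * (v (?f s))^2) = (\<Sum>s\<in>Bs. (?w s)^2 * (v s)^2)"
      using sum_flip[OF F, of "\<lambda>s. (?w s)^2 * (v s)^2"] by (simp add: wt_flip[OF ij])
    have "(1-dl)^2 * nsq Bs v \<le> (\<Sum>s\<in>Bs. (1 - dl * ?w s)^2 * (v s)^2)"
      unfolding nsq_def sum_distrib_left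
    proof (intro sum_mono mult_right_mono)
      fix s
      have w1: "0 \<le> ?w s" "?w s \<le> 1" using wt_range[OF assms, of s] by auto
      have "dl * ?w s \<le> dl * 1" using w1(2) dpos by (rule mult_left_mono)
      then have "0 \<le> 1 - dl" "1 - dl \<le> 1 - dl * ?w s" using dl_half by auto
      then show "(1-dl)^2 \<le> (1 - dl * ?w s)^2" by (simp add: power_mono)
    qed simp
    also have "\<dots> = (\<Sum>s\<in>Bs. (v s)^2 - dl * ?w s * (v s)^2 - dl * ?w s * (v s)^2 + dl^2 * (?w s)^2 * (v s)^2)"
      by (intro sum.cong refl) (simp add: power2_eq_square algebra_simps)
    also have "\<dots> = (\<Sum>s\<in>Bs. (v s)^2 - dl * ?w s * (v s)^2 - dl * ?w s * (v (?f s))^2 + dl^2 * (?w s)^2 * (v (?f s))^2)"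
      using r1 r2 by (simp add: sum.distrib sum_subtractf mult.assoc flip: sum_distrib_left) (simp add: mult.commute)
    also have "\<dots> \<le> (\<Sum>s\<in>Bs. (v s + dl * ?w s * v (?f s))^2)"
      using wt_range[OF assms] by (intro sum_mono pl) auto
    also have "\<dots> = nsq Bs (mv Bs (Er (TwoQ i j)) v)"
      unfolding nsq_def using assms by (intro sum.cong refl) (simp add: mv_two)
    finally show ?thesis .
  qed
  show ?thesis using u l by (simp add: bnd_def lbnd_def)
qed

lemma op_bounds: "valid n ot \<Longrightarrow> bnd Bs (Er ot) ((1+dl)^2) \<and> lbnd Bs (Er ot) ((1-dl)^2)"
  by (cases ot) (auto simp: one_bounds two_bounds)

end


lemma nth_concat_replicate:
  "m < L * length xs \<Longrightarrow> concat (replicate L xs) ! m = xs ! (m mod length xs)"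
proof (induction L arbitrary: m)
  case 0 then show ?case by simp
next
  case (Suc L)
  show ?case
  proof (cases "m < length xs")
    case True then show ?thesis by (simp add: nth_append)
  next
    case False
    then have "m - length xs < L * length xs" using Suc.prems by auto
    then show ?thesis using False Suc.IH by (simp add: nth_append le_mod_geq)
  qed
qed

lemma map_upt_shift: "map f [i..<i+K] = map (\<lambda>k. f (i+k)) [0..<K]"
  by (rule nth_equalityI) auto

lemma map_upt_blocks:
  "map f [0..<L*K] = concat (map (\<lambda>bb. map (\<lambda>k. f (bb*K+k)) [0..<K]) [0..<L])"
proof (induction L)
  case 0 then show ?case by simp
next
  case (Suc L)
  have "[0..<Suc L * K] = [0..<L*K] @ [L*K..<L*K+K]"
    using upt_add_eq_append[of 0 "L*K" K] by (simp add: add.commute)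
  then show ?case using Suc by (simp add: map_upt_shift)
qed

context qsys
begin

abbreviation "Cs \<equiv> Cseq n"
abbreviation "blk \<equiv> Cs @ rev Cs"
abbreviation "Kb \<equiv> length blk"
abbreviation "os \<equiv> ops n L"
abbreviation "M \<equiv> length os"
definition Fm :: "(nat \<times> nat) set \<Rightarrow> nat \<Rightarrow> nat set" where "Fm S m = {q. (m,q) \<in> S}"
definition ES where "ES S = map (\<lambda>m. mm Bs (Er (os!m)) (Xf (Fm S m))) [0..<M]"
definition blockS where "blockS S bb = map (\<lambda>k. mm Bs (Er (blk!k)) (Xf (Fm S (bb*Kb+k)))) [0..<Kb]"
definition Cm where "Cm = lprod Bs (map Er Cs)"

lemma M_eq: "M = L * Kb" by (simp add: ops_def length_concat sum_list_replicate)

lemma Kb_pos: "0 < Kb" using NC1 by (cases "Cseq n") auto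
lemma M_pos: "0 < M" using M_eq Kb_pos L1 by simp

lemma os_nth: "m < M \<Longrightarrow> os ! m = blk ! (m mod Kb)"
  unfolding ops_def by (rule nth_concat_replicate) (simp add: M_eq[unfolded ops_def])

lemma ES_blocks: "ES S = concat (map (blockS S) [0..<L])"
proof -
  have "ES S = map (\<lambda>m. mm Bs (Er (os!m)) (Xf (Fm S m))) [0..<L*Kb]" by (simp add: ES_def M_eq)
  also have "\<dots> = concat (map (\<lambda>bb. map (\<lambda>k. mm Bs (Er (os!(bb*Kb+k))) (Xf (Fm S (bb*Kb+k)))) [0..<Kb]) [0..<L])"
    by (rule map_upt_blocks)
  also have "\<dots> = concat (map (blockS S) [0..<L])"
    unfolding blockS_def
  proof (intro arg_cong[where f=concat] map_cong refl)
    fix bb k assume bb: "bb \<in> set [0..<L]" and k: "k \<in> set [0..<Kb]"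
    have lt: "bb*Kb+k < M"
    proof -
      have "bb*Kb + k < bb*Kb + Kb" using k by simp
      also have "\<dots> = Suc bb * Kb" by simp
      also have "\<dots> \<le> L * Kb" using bb by (intro mult_right_mono) auto
      finally show ?thesis by (simp add: M_eq)
    qed
    have "os!(bb*Kb+k) = blk!k" using os_nth[OF lt] k by simp
    then show "mm Bs (Er (os!(bb*Kb+k))) (Xf (Fm S (bb*Kb+k))) = mm Bs (Er (blk!k)) (Xf (Fm S (bb*Kb+k)))"
      by simp
  qed
  finally show ?thesis .
qed

lemma lprod_ES: "lprod Bs (ES S) = lprod Bs (map (\<lambda>bb. lprod Bs (blockS S bb)) [0..<L])"
  by (simp add: ES_blocks lprod_concat finB comp_def)

lemma sp_Cm: "sp Bs Cm" by (simp add: Cm_def)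

end

sublocale qsys \<subseteq> cr: core "basis_states n" "qsys.Cm n dl a b d"
  by unfold_locales (simp_all add: finB sp_Cm)

context qsys
begin

lemma tp_Cm: "tp Cm = lprod Bs (rev (map Er Cs))"
proof -
  have e: "map tp (map Er Cs) = map Er Cs" by (induction Cs) (simp_all add: tp_Er)
  show ?thesis unfolding Cm_def tp_lprod[OF finB] e ..
qed

lemma clean_block:
  assumes "\<And>k. k < Kb \<Longrightarrow> Fm S (bb*Kb+k) = {}"
  shows "lprod Bs (blockS S bb) = cr.G"
proof -
  have "blockS S bb = map (\<lambda>k. Er (blk!k)) [0..<Kb]"
    unfolding blockS_def
  proof (rule map_cong[OF refl])
    fix k assume "k \<in> set [0..<Kb]"
    then have "Fm S (bb*Kb+k) = {}" using assms by simp
    then show "mm Bs (Er (blk!k)) (Xf (Fm S (bb*Kb+k))) = Er (blk!k)"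
      by (simp only: Xf_empty mm_idm_right[OF finB sp_Er])
  qed
  also have "\<dots> = map Er (map (nth blk) [0..<Kb])" by (simp only: map_map comp_def)
  also have "\<dots> = map Er blk" by (simp only: map_nth)
  finally have "lprod Bs (blockS S bb) = mm Bs (lprod Bs (map Er Cs)) (lprod Bs (map Er (rev Cs)))"
    by (simp only: map_append lprod_append[OF finB])
  also have "lprod Bs (map Er (rev Cs)) = tp Cm" unfolding tp_Cm by (simp only: rev_map)
  finally have "lprod Bs (blockS S bb) = mm Bs Cm (tp Cm)" unfolding Cm_def .
  moreover have "cr.G = mm Bs Cm (tp Cm)" by (rule cr.G_def)
  ultimately show ?thesis unfolding Cm_def by simp
qed

lemma ES_empty: "lprod Bs (ES {}) = cr.P L"
proof -
  have "lprod Bs (ES {}) = lprod Bs (map (\<lambda>bb. lprod Bs (blockS {} bb)) [0..<0+L])" by (simp add: lprod_ES)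
  also have "\<dots> = cr.P L" by (rule cr.lprod_range_const) (simp add: clean_block Fm_def)
  finally show ?thesis .
qed

lemma valid_blk: "k < Kb \<Longrightarrow> valid n (blk!k)"
  using nth_mem[of k blk] valid_Cseq by auto

lemma Fm_sub: assumes "S \<subseteq> segs n L" shows "Fm S m \<subseteq> {..<n}"
proof
  fix q assume "q \<in> Fm S m"
  then have "(m,q) \<in> segs n L" using assms by (auto simp: Fm_def)
  then have "m < M" "q \<in> acts (os!m)" by (auto simp: segs_def)
  moreover have "valid n (os!m)" using valid_ops nth_mem[OF \<open>m < M\<close>] by blast
  ultimately show "q \<in> {..<n}" using valid_acts by blast
qed

lemma block_bounds:
  assumes "S \<subseteq> segs n L"
  shows "bnd Bs (lprod Bs (blockS S bb)) (((1+dl)^2)^Kb) \<and> bnd Bs (tp (lprod Bs (blockS S bb))) (((1+dl)^2)^Kb)"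
proof -
  have e1: "bnd Bs E ((1+dl)^2)" if "E \<in> set (blockS S bb)" for E
  proof -
    have "E \<in> (\<lambda>k. mm Bs (Er (blk!k)) (Xf (Fm S (bb*Kb+k)))) ` {0..<Kb}"
      using that by (simp add: blockS_def)
    then obtain k where k: "k < Kb" "E = mm Bs (Er (blk!k)) (Xf (Fm S (bb*Kb+k)))" by auto
    have "bnd Bs E ((1+dl)^2 * 1)" unfolding k(2)
      using op_bounds[OF valid_blk[OF k(1)]] bnd_Xf[OF Fm_sub[OF assms]] by (intro bnd_mm) auto
    then show ?thesis by simp
  qed
  have e2: "bnd Bs E ((1+dl)^2)" if "E \<in> set (rev (map tp (blockS S bb)))" for E
  proof -
    have "E \<in> (\<lambda>k. tp (mm Bs (Er (blk!k)) (Xf (Fm S (bb*Kb+k))))) ` {0..<Kb}"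
      using that by (simp add: blockS_def image_image)
    then obtain k where k: "k < Kb" "E = tp (mm Bs (Er (blk!k)) (Xf (Fm S (bb*Kb+k))))" by auto
    then have k: "k < Kb" "E = mm Bs (Xf (Fm S (bb*Kb+k))) (Er (blk!k))" by (auto simp: tp_mm tp_Er tp_Xf)
    have "bnd Bs E (1 * (1+dl)^2)" unfolding k(2)
      using op_bounds[OF valid_blk[OF k(1)]] bnd_Xf[OF Fm_sub[OF assms]] by (intro bnd_mm) auto
    then show ?thesis by simp
  qed
  have l: "length (blockS S bb) = Kb" by (simp add: blockS_def)
  have a: "bnd Bs (lprod Bs (blockS S bb)) (((1+dl)^2)^length (blockS S bb))"
    by (rule bnd_lprod[OF finB]) (use e1 in auto)
  have b: "bnd Bs (lprod Bs (rev (map tp (blockS S bb)))) (((1+dl)^2)^length (rev (map tp (blockS S bb))))"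
    by (rule bnd_lprod[OF finB]) (use e2 in auto)
  show ?thesis using a b unfolding tp_lprod[OF finB] length_rev length_map l by blast
qed

lemma lbnd_tpCm: "lbnd Bs (tp Cm) (((1-dl)^2)^length Cs)"
proof -
  have "lbnd Bs (lprod Bs (rev (map Er Cs))) (((1-dl)^2)^length (rev (map Er Cs)))"
  proof (rule lbnd_lprod[OF finB])
    show "\<forall>E\<in>set (rev (map Er Cs)). lbnd Bs E ((1 - dl)\<^sup>2)"
      using op_bounds valid_Cseq by simp
  qed simp
  then show ?thesis unfolding tp_Cm by simp
qed

lemma numeric: "1 \<le> ((1+dl)^2)^Kb \<and> ((1+dl)^2)^Kb \<le> 16 \<and> 1/4 \<le> ((1-dl)^2)^length Cs"
proof -
  define N where "N = length Cs"
  have h1: "1 - real N * dl \<le> (1 - dl)^N"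
    using Bernoulli_inequality[of "-dl" N] dl_half by simp
  have h2: "1/2 \<le> (1 - dl)^N" using h1 dNC unfolding N_def by linarith
  have h3: "(1+dl)^N * (1-dl)^N \<le> 1"
  proof -
    have "(1+dl)^N * (1-dl)^N = (1 - dl^2)^N" by (simp add: power_mult_distrib[symmetric] power2_eq_square algebra_simps)
    also have "\<dots> \<le> 1" using dl_half dpos by (intro power_le_one) (auto simp: power2_eq_square mult_le_one)
    finally show ?thesis .
  qed
  have h4: "(1+dl)^N \<le> 2"
  proof -
    have "(1+dl)^N * (1/2) \<le> (1+dl)^N * (1-dl)^N" using h2 dpos by (intro mult_left_mono) auto
    then show ?thesis using h3 by linarith
  qed
  have e: "((1+dl)^2)^Kb = ((1+dl)^N)^4" unfolding N_def by (simp flip: power_mult) (simp add: mult.commute)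
  have "((1+dl)^N)^4 \<le> 2^4" using h4 dpos by (intro power_mono) auto
  moreover have "1 \<le> ((1+dl)^2)^Kb" using dpos by (simp add: one_le_power)
  moreover have "1/4 \<le> ((1-dl)^2)^N"
  proof -
    have "(1/2)^2 \<le> ((1-dl)^N)^2" using h2 by (intro power_mono) auto
    moreover have "((1-dl)^N)^2 = ((1-dl)^2)^N" by (simp flip: power_mult add: mult.commute)
    ultimately show ?thesis by (simp add: power2_eq_square)
  qed
  ultimately show ?thesis using e unfolding N_def by simp
qed

end


lemma divaux: "k < K \<Longrightarrow> (j*K + k) div K = (j::nat)"
  by (metis add.commute add_cancel_right_left div_less div_mult_self1 less_nat_zero_code)

lemma qpairs_len: "2 * length (qpairs n) + n = n * n"
proof -
  have l: "length (qpairs n) = (\<Sum>i<n. n - Suc i)"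
    by (simp add: qpairs_def length_concat sum_list_sum_nth atLeast0LessThan comp_def)
  have "2 * (\<Sum>i<n. n - Suc i) + n = n * n"
  proof (induction n)
    case (Suc n)
    have "(\<Sum>i<Suc n. Suc n - Suc i) = (\<Sum>i<n. n - Suc i) + n"
    proof -
      have "(\<Sum>i<Suc n. Suc n - Suc i) = (\<Sum>i<n. n - i)" by (simp add: sum.lessThan_Suc)
      also have "\<dots> = (\<Sum>i<n. (n - Suc i) + 1)" by (intro sum.cong refl) auto
      also have "\<dots> = (\<Sum>i<n. n - Suc i) + (\<Sum>i<n. 1)" by (rule sum.distrib)
      also have "\<dots> = (\<Sum>i<n. n - Suc i) + n" by simp
      finally show ?thesis .
    qed
    then show ?case using Suc by simp
  qed simp
  then show ?thesis using l by simp
qed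

lemma len_Cseq: "length (Cseq n) = length (qpairs n) + n" by (simp add: Cseq_def)

lemma filter_count: "length (filter is_one xs) + 2 * length (filter (\<lambda>x. \<not> is_one x) xs)
   = sum_list (map (\<lambda>x. if is_one x then 1 else 2::nat) xs)"
  by (induction xs) auto

lemma sum_list_concat_rep: "sum_list (map h (concat (replicate L xs))) = L * sum_list (map h xs)"
  for h :: "'a \<Rightarrow> nat" by (induction L) auto

context qsys
begin

abbreviation "hh \<equiv> (\<lambda>x. if is_one x then 1 else 2::nat)"

lemma Nprime: "M1 n L + 2 * M2 n L = 2 * L * (n * n)"
proof -
  have "M1 n L + 2 * M2 n L = sum_list (map hh os)" by (simp add: M1_def M2_def filter_count)
  also have "\<dots> = L * sum_list (map hh blk)" unfolding ops_def by (rule sum_list_concat_rep)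
  also have "sum_list (map hh blk) = 2 * sum_list (map hh Cs)" by (simp add: rev_map[symmetric] sum_list_rev)
  also have "sum_list (map hh Cs) = 2 * length (qpairs n) + n"
    by (simp add: Cseq_def comp_def split_beta sum_list_triv)
  finally show ?thesis using qpairs_len[of n] by simp
qed

lemma card_segs: "card (segs n L) = M1 n L + 2 * M2 n L"
proof -
  have e: "segs n L = Sigma {..<M} (\<lambda>m. acts (os!m))" by (auto simp: segs_def)
  have fa: "finite (acts x)" for x by (cases x) auto
  have c: "card (acts (os!m)) = hh (os!m)" if "m < M" for m
  proof -
    have "valid n (os!m)" using valid_ops nth_mem[OF that] by blast
    then show ?thesis by (cases "os!m") auto
  qed
  have "card (segs n L) = (\<Sum>m<M. card (acts (os!m)))" unfolding e by (simp add: fa)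
  also have "\<dots> = (\<Sum>m<M. hh (os!m))" by (intro sum.cong refl) (simp add: c)
  also have "\<dots> = sum_list (map hh os)" by (simp add: sum_list_sum_nth atLeast0LessThan)
  also have "\<dots> = M1 n L + 2 * M2 n L" by (simp add: M1_def M2_def filter_count)
  finally show ?thesis .
qed

lemma finite_segs: "finite (segs n L)"
proof -
  have "segs n L \<subseteq> {..<M} \<times> {..<n}"
  proof
    fix x assume x: "x \<in> segs n L"
    then have "snd x \<in> Fm (segs n L) (fst x)" by (auto simp: Fm_def)
    then have "snd x < n" using Fm_sub[of "segs n L" "fst x"] by auto
    then show "x \<in> {..<M} \<times> {..<n}" using x by (auto simp: segs_def)
  qed
  then show ?thesis by (rule finite_subset) auto
qed

lemma configs_LS: "configs n L = LS Bs M" by (auto simp: configs_def LS_def)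

lemma finite_configs: "finite (configs n L)"
  unfolding configs_def using finite_lists_length_eq[OF finB, of M] by (simp add: conj_commute)

lemma W2_sum: assumes "S \<subseteq> segs n L"
  shows "(\<Sum>ss\<in>configs n L. W2 n L dl a b d S ss) = tr Bs (lprod Bs (ES S))"
proof -
  have ne: "ES S \<noteq> []" using M_pos by (simp add: ES_def)
  have len: "length (ES S) = M" by (simp add: ES_def)
  have "tr Bs (lprod Bs (ES S)) = (\<Sum>ss\<in>LS Bs M. \<Prod>m<M. (ES S!m) (ss!m) (ss!((m+1) mod M)))"
    using trace_sum[OF finB ne] len by simp
  also have "\<dots> = (\<Sum>ss\<in>configs n L. W2 n L dl a b d S ss)"
    unfolding configs_LS
  proof (intro sum.cong refl)
    fix ss assume ss: "ss \<in> LS Bs M"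
    have "(\<Prod>m<M. (ES S!m) (ss!m) (ss!((m+1) mod M))) =
          (\<Prod>m<M. elem dl a b d (os!m) (ss!m) (flip (Fm S m) (ss!((m+1) mod M))))"
    proof (intro prod.cong refl)
      fix m assume m: "m \<in> {..<M}"
      have i1: "ss!m \<in> Bs" using ss m by (auto simp: LS_def)
      have i2: "ss!((m+1) mod M) \<in> Bs" using ss M_pos by (auto simp: LS_def)
      show "(ES S!m) (ss!m) (ss!((m+1) mod M)) = elem dl a b d (os!m) (ss!m) (flip (Fm S m) (ss!((m+1) mod M)))"
        using m mm_Er_Xf[OF Fm_sub[OF assms] i1 i2] by (simp add: ES_def)
    qed
    then show "(\<Prod>m<M. (ES S!m) (ss!m) (ss!((m+1) mod M))) = W2 n L dl a b d S ss"
      by (simp add: W2_def Fm_def Let_def)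
  qed
  finally show ?thesis by simp
qed

lemma W0_W2: "W0 n L dl a b d ss = W2 n L dl a b d {} ss"
  by (simp add: W0_def W2_def)

lemma pair_bound:
  assumes S: "S \<subseteq> segs n L" "card S = 2"
  shows "tr Bs (lprod Bs (ES S)) \<le> 256 * tr Bs (cr.P L)"
proof -
  have "\<exists>x y. S = {x,y} \<and> x \<noteq> y" using S(2) by (simp only: card_2_iff)
  then obtain s1 s2 where s: "S = {s1, s2}" "s1 \<noteq> s2" by blast
  define c1 where "c1 = fst s1 div Kb"
  define c2 where "c2 = fst s2 div Kb"
  have fs: "fst s1 < L * Kb" "fst s2 < L * Kb" using S(1) s by (auto simp: segs_def M_eq)
  have cl: "c1 < L" "c2 < L" unfolding c1_def c2_def
    by (rule less_mult_imp_div_less[OF fs(1)], rule less_mult_imp_div_less[OF fs(2)])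
  define g where "g bb = lprod Bs (blockS S bb)" for bb
  have gG: "g j = cr.G" if "j \<noteq> c1" "j \<noteq> c2" for j
    unfolding g_def
  proof (rule clean_block)
    fix k assume k: "k < Kb"
    show "Fm S (j*Kb+k) = {}"
    proof (rule ccontr)
      assume "Fm S (j*Kb+k) \<noteq> {}"
      then obtain q where "(j*Kb+k, q) \<in> S" by (auto simp: Fm_def)
      then have "fst s1 = j*Kb+k \<or> fst s2 = j*Kb+k" using s by auto
      moreover have "(j*Kb+k) div Kb = j" using k by (rule divaux)
      ultimately show False using that unfolding c1_def c2_def by auto
    qed
  qed
  have gb: "sp Bs (g j) \<and> bnd Bs (g j) (((1+dl)^2)^Kb) \<and> bnd Bs (tp (g j)) (((1+dl)^2)^Kb)" for j
    unfolding g_def using block_bounds[OF S(1), of j] sp_lprod by blast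
  have num: "1 \<le> ((1+dl)^2)^Kb" "((1+dl)^2)^Kb \<le> 16" "1/4 \<le> ((1-dl)^2)^length Cs" using numeric by blast+
  have ge: "g = (\<lambda>bb. lprod Bs (blockS S bb))" by (rule ext) (simp add: g_def)
  have eq: "lprod Bs (ES S) = lprod Bs (map g [0..<L])" unfolding ge by (rule lprod_ES)
  show ?thesis
  proof (cases "c1 \<le> c2")
    case True
    show ?thesis unfolding eq
      by (rule cr.two_block_bound[OF lbnd_tpCm num(3) num(1) num(2) gG True cl(2) gb])
  next
    case False
    have gG': "g j = cr.G" if "j \<noteq> c2" "j \<noteq> c1" for j using gG that by blast
    have c21: "c2 \<le> c1" using False by simp
    show ?thesis unfolding eq
      by (rule cr.two_block_bound[OF lbnd_tpCm num(3) num(1) num(2) gG' c21 cl(1) gb])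
  qed
qed

end


context qsys
begin

lemma ratio:
  "(\<Sum>\<xi>\<in>C2 n L dl a b d. pi2 n L dl a b d \<xi>) / (\<Sum>\<xi>\<in>C0 n L dl a b d. pi0 n L dl a b d \<xi>)
     \<le> 512 * real L * real n ^ 2"
proof -
  define Np where "Np = M1 n L + 2 * M2 n L"
  define Wt where "Wt = Wtotal n L dl a b d"
  define X where "X = (\<Sum>\<xi>\<in>C2 n L dl a b d. W2 n L dl a b d (fst \<xi>) (snd \<xi>))"
  define Y where "Y = (\<Sum>\<gamma>\<in>C0 n L dl a b d. W0 n L dl a b d \<gamma>)"
  define Z where "Z = tr Bs (cr.P L)"
  define Pairs where "Pairs = {S. S \<subseteq> segs n L \<and> card S = 2}"
  have s2: "(\<Sum>\<xi>\<in>C2 n L dl a b d. pi2 n L dl a b d \<xi>) = 2 / real Np * X / Wt"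
    unfolding pi2_def X_def Np_def Wt_def by (simp add: sum_divide_distrib sum_distrib_left)
  have s0: "(\<Sum>\<xi>\<in>C0 n L dl a b d. pi0 n L dl a b d \<xi>) = Y / Wt"
    unfolding pi0_def Y_def Wt_def by (simp add: sum_divide_distrib)
  have YZ: "Y = Z"
  proof -
    have "Y = (\<Sum>\<gamma>\<in>configs n L. W0 n L dl a b d \<gamma>)"
      unfolding Y_def by (rule sum.mono_neutral_left[OF finite_configs]) (auto simp: C0_def)
    also have "\<dots> = (\<Sum>\<gamma>\<in>configs n L. W2 n L dl a b d {} \<gamma>)" by (simp add: W0_W2)
    also have "\<dots> = tr Bs (lprod Bs (ES {}))" by (rule W2_sum) simp
    finally show ?thesis by (simp add: ES_empty Z_def)
  qed
  have finP: "finite Pairs" unfolding Pairs_def using finite_segs by simp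
  have XZ: "X \<le> real (card Pairs) * (256 * Z)"
  proof -
    have "X = (\<Sum>\<xi>\<in>Pairs \<times> configs n L. W2 n L dl a b d (fst \<xi>) (snd \<xi>))"
      unfolding X_def
      by (rule sum.mono_neutral_left) (use finP finite_configs in \<open>auto simp: C2_def Pairs_def\<close>)
    also have "\<dots> = (\<Sum>S\<in>Pairs. \<Sum>ss\<in>configs n L. W2 n L dl a b d S ss)"
      by (simp add: sum.cartesian_product split_beta)
    also have "\<dots> = (\<Sum>S\<in>Pairs. tr Bs (lprod Bs (ES S)))"
      by (intro sum.cong refl W2_sum) (auto simp: Pairs_def)
    also have "\<dots> \<le> (\<Sum>S\<in>Pairs. 256 * Z)"
      unfolding Z_def by (intro sum_mono pair_bound) (auto simp: Pairs_def)
    also have "\<dots> = real (card Pairs) * (256 * Z)" by simp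
    finally show ?thesis .
  qed
  have cP: "card Pairs = Np choose 2"
    unfolding Pairs_def Np_def card_segs[symmetric] by (rule n_subsets[OF finite_segs])
  have Npe: "Np = 2 * L * (n * n)" unfolding Np_def by (rule Nprime)
  have Nppos: "0 < Np" unfolding Npe using n1 L1 by simp
  have ch: "2 * real (card Pairs) \<le> real Np * real Np"
  proof -
    have "2 * (Np choose 2) \<le> Np * (Np - 1)" unfolding choose_two by simp
    also have "\<dots> \<le> Np * Np" by simp
    finally have "2 * (Np choose 2) \<le> Np * Np" .
    then show ?thesis unfolding cP by (metis of_nat_le_iff of_nat_mult of_nat_numeral)
  qed
  have Z0: "0 \<le> Z" unfolding Z_def by (rule cr.trP_nonneg)
  have main: "2 / real Np * X \<le> 256 * real Np * Z"
  proof -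
    have "2 / real Np * X \<le> 2 / real Np * (real (card Pairs) * (256 * Z))"
      using XZ Nppos by (intro mult_left_mono) auto
    also have "\<dots> = (2 * real (card Pairs)) * (256 * Z) / real Np" by simp
    also have "\<dots> \<le> (real Np * real Np) * (256 * Z) / real Np"
      using ch Z0 Nppos by (intro divide_right_mono mult_right_mono) auto
    also have "\<dots> = 256 * real Np * Z" using Nppos by simp
    finally show ?thesis .
  qed
  have rhs0: "0 \<le> 512 * real L * real n ^ 2" by simp
  have "(2 / real Np * X / Wt) / (Y / Wt) \<le> 256 * real Np"
  proof (cases "Wt = 0 \<or> Y = 0")
    case True
    then show ?thesis by auto
  next
    case False
    then have Yp: "0 < Y" using YZ Z0 by auto
    have "(2 / real Np * X / Wt) / (Y / Wt) = (2 / real Np * X) / Y" using False by simp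
    also have "\<dots> \<le> (256 * real Np * Y) / Y" using main YZ Yp by (intro divide_right_mono) auto
    also have "\<dots> = 256 * real Np" using Yp by simp
    finally show ?thesis .
  qed
  also have "256 * real Np = 512 * real L * real n ^ 2" unfolding Npe by (simp add: power2_eq_square)
  finally show ?thesis unfolding s2 s0 .
qed

end


theorem lemma2:
  shows "\<forall>c > 0. \<exists>K. \<forall>(n::nat) (\<beta>::real) (\<epsilon>::real) (L::nat)
           (a::nat \<Rightarrow> nat \<Rightarrow> real) (b::nat \<Rightarrow> nat \<Rightarrow> real) (d::nat \<Rightarrow> real).
     n \<ge> 1 \<and> \<beta> \<ge> 1 \<and> \<epsilon> > 0 \<and> \<epsilon> \<le> 1
     \<and> (\<forall>i j. i < j \<and> j < n \<longrightarrow> \<bar>b i j\<bar> \<le> a i j \<and> a i j \<le> 1/2)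
     \<and> (\<forall>i < n. \<bar>d i\<bar> \<le> 1)
     \<and> real n ^ 2 * \<beta> ^ 2 / \<epsilon> \<le> real L
     \<and> real L \<le> c * real n ^ 2 * \<beta> ^ 2 / \<epsilon>
     \<longrightarrow> (\<Sum>\<xi>\<in>C2 n L (\<beta> / (2 * real L)) a b d. pi2 n L (\<beta> / (2 * real L)) a b d \<xi>)
         / (\<Sum>\<xi>\<in>C0 n L (\<beta> / (2 * real L)) a b d. pi0 n L (\<beta> / (2 * real L)) a b d \<xi>)
         \<le> K * real n ^ 4 * \<beta> ^ 2 / \<epsilon>"
proof (intro allI impI)
  fix c :: real assume c: "c > 0"
  show "\<exists>K. \<forall>(n::nat) (\<beta>::real) (\<epsilon>::real) (L::nat)
           (a::nat \<Rightarrow> nat \<Rightarrow> real) (b::nat \<Rightarrow> nat \<Rightarrow> real) (d::nat \<Rightarrow> real).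
     n \<ge> 1 \<and> \<beta> \<ge> 1 \<and> \<epsilon> > 0 \<and> \<epsilon> \<le> 1
     \<and> (\<forall>i j. i < j \<and> j < n \<longrightarrow> \<bar>b i j\<bar> \<le> a i j \<and> a i j \<le> 1/2)
     \<and> (\<forall>i < n. \<bar>d i\<bar> \<le> 1)
     \<and> real n ^ 2 * \<beta> ^ 2 / \<epsilon> \<le> real L
     \<and> real L \<le> c * real n ^ 2 * \<beta> ^ 2 / \<epsilon>
     \<longrightarrow> (\<Sum>\<xi>\<in>C2 n L (\<beta> / (2 * real L)) a b d. pi2 n L (\<beta> / (2 * real L)) a b d \<xi>)
         / (\<Sum>\<xi>\<in>C0 n L (\<beta> / (2 * real L)) a b d. pi0 n L (\<beta> / (2 * real L)) a b d \<xi>)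
         \<le> K * real n ^ 4 * \<beta> ^ 2 / \<epsilon>"
  proof (rule exI[of _ "512 * c"], intro allI impI, elim conjE)
    fix n :: nat and \<beta> \<epsilon> :: real and L :: nat and a b :: "nat \<Rightarrow> nat \<Rightarrow> real" and d :: "nat \<Rightarrow> real"
    assume n1: "n \<ge> 1" and b1: "\<beta> \<ge> 1" and e0: "\<epsilon> > 0" and e1: "\<epsilon> \<le> 1"
      and ab: "\<forall>i j. i < j \<and> j < n \<longrightarrow> \<bar>b i j\<bar> \<le> a i j \<and> a i j \<le> 1/2"
      and dd: "\<forall>i < n. \<bar>d i\<bar> \<le> 1"
      and Llo: "real n ^ 2 * \<beta> ^ 2 / \<epsilon> \<le> real L"
      and Lhi: "real L \<le> c * real n ^ 2 * \<beta> ^ 2 / \<epsilon>"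
    define dl where "dl = \<beta> / (2 * real L)"
    have n2: "1 \<le> real n ^ 2" using n1 by simp
    have bb: "\<beta> \<le> \<beta> ^ 2" using b1 by (simp add: power2_eq_square)
    have b2e: "\<beta> ^ 2 \<le> \<beta> ^ 2 / \<epsilon>" using e0 e1 b1 by (simp add: le_divide_eq mult_le_cancel_left1)
    have nbL: "real n ^ 2 * \<beta> \<le> real L"
    proof -
      have "real n ^ 2 * \<beta> \<le> real n ^ 2 * (\<beta> ^ 2 / \<epsilon>)" using bb b2e by (intro mult_left_mono) auto
      then show ?thesis using Llo by simp
    qed
    have L1: "1 \<le> L"
    proof -
      have "1 \<le> real n ^ 2 * \<beta>" using n2 b1 by (metis mult_mono' mult_1 zero_le_one)
      then show ?thesis using nbL by linarith
    qed
    have Lpos: "0 < real L" using L1 by simp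
    have dpos: "0 \<le> dl" unfolding dl_def using b1 Lpos by simp
    have NCn: "real (length (Cseq n)) \<le> real n ^ 2"
    proof -
      have "2 * length (Cseq n) = n * n + n" using qpairs_len[of n] len_Cseq[of n] by simp
      also have "\<dots> \<le> 2 * (n * n)" using n1 by simp
      finally have "length (Cseq n) \<le> n * n" by simp
      then show ?thesis by (simp add: power2_eq_square flip: of_nat_mult)
    qed
    have dNC: "real (length (Cseq n)) * dl \<le> 1/2"
    proof -
      have "real (length (Cseq n)) * dl * (2 * real L) = real (length (Cseq n)) * \<beta>"
        unfolding dl_def using Lpos by simp
      also have "\<dots> \<le> real n ^ 2 * \<beta>" using NCn b1 by (intro mult_right_mono) auto
      also have "\<dots> \<le> real L" by (rule nbL)
      finally have "real (length (Cseq n)) * dl * (2 * real L) \<le> real L" .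
      then show ?thesis using Lpos by (simp add: field_simps)
    qed
    interpret qsys n L dl a b d
      by unfold_locales (use n1 L1 dpos dNC ab dd in auto)
    have "(\<Sum>\<xi>\<in>C2 n L dl a b d. pi2 n L dl a b d \<xi>) / (\<Sum>\<xi>\<in>C0 n L dl a b d. pi0 n L dl a b d \<xi>)
        \<le> 512 * real L * real n ^ 2" by (rule ratio)
    also have "\<dots> \<le> 512 * (c * real n ^ 2 * \<beta> ^ 2 / \<epsilon>) * real n ^ 2"
      using Lhi by (intro mult_right_mono) auto
    also have "\<dots> = 512 * c * real n ^ 4 * \<beta> ^ 2 / \<epsilon>" by (simp add: power2_eq_square power4_eq_xxxx)
    finally show "(\<Sum>\<xi>\<in>C2 n L (\<beta> / (2 * real L)) a b d. pi2 n L (\<beta> / (2 * real L)) a b d \<xi>)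
         / (\<Sum>\<xi>\<in>C0 n L (\<beta> / (2 * real L)) a b d. pi0 n L (\<beta> / (2 * real L)) a b d \<xi>)
         \<le> 512 * c * real n ^ 4 * \<beta> ^ 2 / \<epsilon>" unfolding dl_def .
  qed
qed


end
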